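(* Let $\lambda,\lambda_1,\sigma,\sigma_1\in\mathbb{C}^*$ and $\eta,\eta_1\in\mathbb{C}$, and let $R$ and $S$ be irreducible restricted $\mathcal{G}$-modules. Then: (1) $\Omega(\lambda,\eta,\sigma,0)\otimes R\cong\Omega(\lambda_1,\eta_1,\sigma_1,0)\otimes S$ as $\mathcal{G}$-modules if and only if $\lambda=\lambda_1$, $\eta=\eta_1$, $\sigma=\sigma_1$ and $R\cong S$; (2) $\Omega(\lambda,\eta,0,\sigma)\otimes R\cong\Omega(\lambda_1,\eta_1,0,\sigma_1)\otimes S$ if and only if $\lambda=\lambda_1$, $\eta=\eta_1$, $\sigma=\sigma_1$ and $R\cong S$; (3) $\Omega(\lambda,\eta,\sigma,0)\otimes R$ and $\Omega(\lambda_1,\eta_1,0,\sigma_1)\otimes S$ are not isomorphic.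
   Context: $\mathcal{G}$ is the complex Lie algebra with basis $\{L_n,H_n,I_n,J_n,\mathbf{c}_1,\mathbf{c}_2,\mathbf{c}_3: n\in\mathbb{Z}\}$ whose brackets of basis elements are $[L_m,L_n]=(n-m)L_{m+n}+\frac{m^3-m}{12}\delta_{m+n,0}\mathbf{c}_1$, $[L_m,H_n]=nH_{m+n}+m^2\delta_{m+n,0}\mathbf{c}_2$, $[H_m,H_n]=m\delta_{m+n,0}\mathbf{c}_3$, $[L_m,I_n]=(n-m)I_{m+n}$, $[L_m,J_n]=(n-m)J_{m+n}$, $[H_m,I_n]=I_{m+n}$, $[H_m,J_n]=-J_{m+n}$ (and antisymmetric counterparts), all other brackets of basis elements zero. $\mathcal{G}=\bigoplus_{i\in\mathbb{Z}}\mathcal{G}^i$ is $\mathbb{Z}$-graded with $\mathcal{G}^i$ spanned by $L_i,H_i,I_i,J_i$ (and also $\mathbf{c}_1,\mathbf{c}_2,\mathbf{c}_3$ when $i=0$). A $\mathcal{G}$-module $R$ is restricted if for every $v\in R$ there is $N\in\mathbb{N}$ with $\mathcal{G}^iv=0$ for all $i>N$. For $\lambda\in\mathbb{C}^*,\eta\in\mathbb{C}$, $\sigma\in\mathbb{C}^*$: $\Omega(\lambda,\eta,\sigma,0)$ is $\mathbb{C}[X,Y]$ with $L_mf(X,Y)=\lambda^mf(X,Y-m)(Y-mX+m\eta)$, $H_mf=\lambda^mXf(X,Y-m)$, $I_mf=\lambda^m\sigma f(X-1,Y-m)$, and $J_m,\mathbf{c}_1,\mathbf{c}_2,\mathbf{c}_3$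 acting as $0$; $\Omega(\lambda,\eta,0,\sigma)$ is $\mathbb{C}[X,Y]$ with $L_mf=\lambda^mf(X,Y-m)(Y+mX+m\eta)$, $H_mf=\lambda^mXf(X,Y-m)$, $J_mf=\lambda^m\sigma f(X+1,Y-m)$, and $I_m,\mathbf{c}_1,\mathbf{c}_2,\mathbf{c}_3$ acting as $0$ ($m\in\mathbb{Z}$). Tensor products carry the action $x(u\otimes v)=xu\otimes v+u\otimes xv$. *)

theory Defs
  imports Complex_Main "HOL-Library.Function_Algebras"
begin

datatype gbasis = L int | H int | I int | J int | C1 | C2 | C3

fun brk :: "gbasis \<Rightarrow> gbasis \<Rightarrow> (complex \<times> gbasis) list" where
  "brk (L m) (L n) = [(of_int (n - m), L (m + n))]
      @ (if m + n = 0 then [((of_int m ^ 3 - of_int m) / 12, C1)] else [])"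
| "brk (L m) (H n) = [(of_int n, H (m + n))]
      @ (if m + n = 0 then [(of_int m ^ 2, C2)] else [])"
| "brk (H n) (L m) = [(- of_int n, H (m + n))]
      @ (if m + n = 0 then [(- (of_int m ^ 2), C2)] else [])"
| "brk (H m) (H n) = (if m + n = 0 then [(of_int m, C3)] else [])"
| "brk (L m) (I n) = [(of_int (n - m), I (m + n))]"
| "brk (I n) (L m) = [(- of_int (n - m), I (m + n))]"
| "brk (L m) (J n) = [(of_int (n - m), J (m + n))]"
| "brk (J n) (L m) = [(- of_int (n - m), J (m + n))]"
| "brk (H m) (I n) = [(1, I (m + n))]"
| "brk (I n) (H m) = [(-1, I (m + n))]"
| "brk (H m) (J n) = [(-1, J (m + n))]"
| "brk (J n) (H m) = [(1, J (m + n))]"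
| "brk _ _ = []"

definition cvs :: "(complex \<Rightarrow> 'v::ab_group_add \<Rightarrow> 'v) \<Rightarrow> 'v set \<Rightarrow> bool" where
  "cvs s V \<longleftrightarrow> 0 \<in> V \<and> (\<forall>x\<in>V. \<forall>y\<in>V. x + y \<in> V) \<and> (\<forall>c. \<forall>x\<in>V. s c x \<in> V)
     \<and> (\<forall>a. \<forall>x\<in>V. \<forall>y\<in>V. s a (x + y) = s a x + s a y)
     \<and> (\<forall>a b. \<forall>x\<in>V. s (a + b) x = s a x + s b x)
     \<and> (\<forall>a b. \<forall>x\<in>V. s a (s b x) = s (a * b) x)
     \<and> (\<forall>x\<in>V. s 1 x = x)"

definition gmod :: "(complex \<Rightarrow> 'v::ab_group_add \<Rightarrow> 'v) \<Rightarrow> 'v set \<Rightarrow> (gbasis \<Rightarrow> 'v \<Rightarrow> 'v) \<Rightarrow> bool" where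
  "gmod s V \<rho> \<longleftrightarrow> cvs s V
     \<and> (\<forall>e. \<forall>x\<in>V. \<rho> e x \<in> V)
     \<and> (\<forall>e. \<forall>x\<in>V. \<forall>y\<in>V. \<rho> e (x + y) = \<rho> e x + \<rho> e y)
     \<and> (\<forall>e c. \<forall>x\<in>V. \<rho> e (s c x) = s c (\<rho> e x))
     \<and> (\<forall>e f. \<forall>x\<in>V. \<rho> e (\<rho> f x) - \<rho> f (\<rho> e x)
                        = sum_list (map (\<lambda>(c, g). s c (\<rho> g x)) (brk e f)))"

definition irreducible_gmod :: "(complex \<Rightarrow> 'v::ab_group_add \<Rightarrow> 'v) \<Rightarrow> 'v set \<Rightarrow> (gbasis \<Rightarrow> 'v \<Rightarrow> 'v) \<Rightarrow> bool" where
  "irreducible_gmod s V \<rho> \<longleftrightarrow> gmod s V \<rho> \<and> V \<noteq> {0}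
     \<and> (\<forall>W. W \<subseteq> V \<and> 0 \<in> W \<and> (\<forall>x\<in>W. \<forall>y\<in>W. x + y \<in> W) \<and> (\<forall>c. \<forall>x\<in>W. s c x \<in> W)
            \<and> (\<forall>e. \<forall>x\<in>W. \<rho> e x \<in> W) \<longrightarrow> W = {0} \<or> W = V)"

text \<open>Restricted: every vector is killed by all G^i, i > N (G^i spanned by L_i,H_i,I_i,J_i for i > 0).\<close>
definition restricted_gmod :: "'v::ab_group_add set \<Rightarrow> (gbasis \<Rightarrow> 'v \<Rightarrow> 'v) \<Rightarrow> bool" where
  "restricted_gmod V \<rho> \<longleftrightarrow> (\<forall>v\<in>V. \<exists>N::nat. \<forall>i::int. i > int N \<longrightarrow>
      \<rho> (L i) v = 0 \<and> \<rho> (H i) v = 0 \<and> \<rho> (I i) v = 0 \<and> \<rho> (J i) v = 0)"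

definition gmod_iso :: "(complex \<Rightarrow> 'v::ab_group_add \<Rightarrow> 'v) \<Rightarrow> 'v set \<Rightarrow> (gbasis \<Rightarrow> 'v \<Rightarrow> 'v)
     \<Rightarrow> (complex \<Rightarrow> 'w::ab_group_add \<Rightarrow> 'w) \<Rightarrow> 'w set \<Rightarrow> (gbasis \<Rightarrow> 'w \<Rightarrow> 'w) \<Rightarrow> bool" where
  "gmod_iso s1 V1 \<rho>1 s2 V2 \<rho>2 \<longleftrightarrow> (\<exists>\<phi>. bij_betw \<phi> V1 V2
     \<and> (\<forall>x\<in>V1. \<forall>y\<in>V1. \<phi> (x + y) = \<phi> x + \<phi> y)
     \<and> (\<forall>c. \<forall>x\<in>V1. \<phi> (s1 c x) = s2 c (\<phi> x))
     \<and> (\<forall>e. \<forall>x\<in>V1. \<phi> (\<rho>1 e x) = \<rho>2 e (\<phi> x)))"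

text \<open>Model of C[X,Y] \<otimes> R: R-valued polynomial functions on C^2, i.e. functions
  (x,y) \<mapsto> sum over (a,b) of x^a y^b v_(a,b) with finitely many v_(a,b) \<in> R.
  (Under this identification f \<otimes> v corresponds to (x,y) \<mapsto> f(x,y) v.)\<close>
definition tcar :: "(complex \<Rightarrow> 'v::ab_group_add \<Rightarrow> 'v) \<Rightarrow> 'v set \<Rightarrow> (complex \<times> complex \<Rightarrow> 'v) set" where
  "tcar s V = {F. \<exists>A c. finite A \<and> (\<forall>ab\<in>A. c ab \<in> V)
       \<and> F = (\<lambda>(x, y). \<Sum>ab\<in>A. s (x ^ fst ab * y ^ snd ab) (c ab))}"

definition tsmul :: "(complex \<Rightarrow> 'v::ab_group_add \<Rightarrow> 'v) \<Rightarrow> complex \<Rightarrow> (complex \<times> complex \<Rightarrow> 'v) \<Rightarrow> (complex \<times> complex \<Rightarrow> 'v)" where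
  "tsmul s c F = (\<lambda>p. s c (F p))"

text \<open>Action on Omega(lam,eta,sig,0) \<otimes> R:  x(f \<otimes> v) = xf \<otimes> v + f \<otimes> xv.\<close>
definition omegaA_tensor :: "(complex \<Rightarrow> 'v::ab_group_add \<Rightarrow> 'v) \<Rightarrow> (gbasis \<Rightarrow> 'v \<Rightarrow> 'v)
     \<Rightarrow> complex \<Rightarrow> complex \<Rightarrow> complex \<Rightarrow> gbasis \<Rightarrow> (complex \<times> complex \<Rightarrow> 'v) \<Rightarrow> (complex \<times> complex \<Rightarrow> 'v)" where
  "omegaA_tensor s \<rho> lam eta sig e F = (\<lambda>(x, y). (case e of
       L m \<Rightarrow> s (lam powi m * (y - of_int m * x + of_int m * eta)) (F (x, y - of_int m))
     | H m \<Rightarrow> s (lam powi m * x) (F (x, y - of_int m))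
     | I m \<Rightarrow> s (lam powi m * sig) (F (x - 1, y - of_int m))
     | _ \<Rightarrow> 0) + \<rho> e (F (x, y)))"

definition omegaB_tensor :: "(complex \<Rightarrow> 'v::ab_group_add \<Rightarrow> 'v) \<Rightarrow> (gbasis \<Rightarrow> 'v \<Rightarrow> 'v)
     \<Rightarrow> complex \<Rightarrow> complex \<Rightarrow> complex \<Rightarrow> gbasis \<Rightarrow> (complex \<times> complex \<Rightarrow> 'v) \<Rightarrow> (complex \<times> complex \<Rightarrow> 'v)" where
  "omegaB_tensor s \<rho> lam eta sig e F = (\<lambda>(x, y). (case e of
       L m \<Rightarrow> s (lam powi m * (y + of_int m * x + of_int m * eta)) (F (x, y - of_int m))
     | H m \<Rightarrow> s (lam powi m * x) (F (x, y - of_int m))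
     | J m \<Rightarrow> s (lam powi m * sig) (F (x + 1, y - of_int m))
     | _ \<Rightarrow> 0) + \<rho> e (F (x, y)))"

end

theory Submission
  imports Defs "HOL-Computational_Algebra.Polynomial"
begin


section \<open>Vector space basics\<close>

lemma cvsD:
  assumes "cvs s V"
  shows "0 \<in> V" "\<And>x y. x \<in> V \<Longrightarrow> y \<in> V \<Longrightarrow> x + y \<in> V" "\<And>c x. x \<in> V \<Longrightarrow> s c x \<in> V"
    "\<And>a x y. x \<in> V \<Longrightarrow> y \<in> V \<Longrightarrow> s a (x + y) = s a x + s a y"
    "\<And>a b x. x \<in> V \<Longrightarrow> s (a + b) x = s a x + s b x"
    "\<And>a b x. x \<in> V \<Longrightarrow> s a (s b x) = s (a * b) x"
    "\<And>x. x \<in> V \<Longrightarrow> s 1 x = x"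
  using assms unfolding cvs_def by blast+

lemma cvs_s0r: assumes "cvs s V" shows "s c 0 = 0"
proof -
  have "s c (0 + 0) = s c 0 + s c 0" using cvsD(1,4)[OF assms] by blast
  then show ?thesis by simp
qed

lemma cvs_s0l: assumes "cvs s V" "u \<in> V" shows "s 0 u = 0"
proof -
  have "s (0 + 0) u = s 0 u + s 0 u" using cvsD(5)[OF assms(1)] assms(2) by blast
  then show ?thesis by simp
qed

lemma cvs_neg: assumes "cvs s V" "u \<in> V" shows "s (- c) u = - s c u"
proof -
  have "s (c + - c) u = s c u + s (-c) u" using cvsD(5)[OF assms(1)] assms(2) by blast
  then have "s c u + s (-c) u = 0" using cvs_s0l[OF assms] by simp
  then show ?thesis by (simp add: eq_neg_iff_add_eq_0 add.commute)
qed

lemma cvs_uminus: assumes "cvs s V" "u \<in> V" shows "- u \<in> V"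
proof -
  have "s (- 1) u = - u" using cvs_neg[OF assms, of 1] cvsD(7)[OF assms(1) assms(2)] by simp
  then show ?thesis using cvsD(3)[OF assms(1) assms(2)] by metis
qed

lemma cvs_diff_mem: assumes "cvs s V" "u \<in> V" "v \<in> V" shows "u - v \<in> V"
  using cvsD(2)[OF assms(1) assms(2) cvs_uminus[OF assms(1,3)]] by simp

lemma cvs_sdiff: assumes "cvs s V" "u \<in> V" shows "s (a - b) u = s a u - s b u"
  using cvsD(5)[OF assms(1) assms(2), of a "-b"] cvs_neg[OF assms, of b] by simp

lemma cvs_sminus: assumes "cvs s V" "u \<in> V" "v \<in> V" shows "s c (u - v) = s c u - s c v"
proof -
  have "s c (u + - v) = s c u + s c (- v)" using cvsD(4)[OF assms(1) assms(2) cvs_uminus[OF assms(1,3)]] by blast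
  moreover have "s c (- v) = - s c v"
  proof -
    have "- v = s (-1) v" using cvs_neg[OF assms(1,3), of 1] cvsD(7)[OF assms(1,3)] by simp
    then have "s c (- v) = s (c * -1) v" using cvsD(6)[OF assms(1,3)] by simp
    also have "\<dots> = - s c v" using cvs_neg[OF assms(1,3), of c] by simp
    finally show ?thesis .
  qed
  ultimately show ?thesis by simp
qed

lemma cvs_sum_mem: assumes "cvs s V" "\<forall>i\<in>A. u i \<in> V" shows "(\<Sum>i\<in>A. u i) \<in> V"
  using assms(2)
proof (induction A rule: infinite_finite_induct)
  case (infinite A) then show ?case using cvsD(1)[OF assms(1)] by simp
next
  case empty then show ?case using cvsD(1)[OF assms(1)] by simp
next
  case (insert x F) then show ?case using cvsD(2)[OF assms(1)] by simp
qed

lemma cvs_s_sumv: assumes "cvs s V" "\<forall>i\<in>A. u i \<in> V" shows "s c (\<Sum>i\<in>A. u i) = (\<Sum>i\<in>A. s c (u i))"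
  using assms(2)
proof (induction A rule: infinite_finite_induct)
  case (infinite A) then show ?case using cvs_s0r[OF assms(1)] by simp
next
  case empty then show ?case using cvs_s0r[OF assms(1)] by simp
next
  case (insert x F) then show ?case using cvsD(4)[OF assms(1), of "u x" "sum u F" c] cvs_sum_mem[OF assms(1), of F u] by simp
qed

lemma cvs_s_sums: assumes "cvs s V" "u \<in> V" shows "s (\<Sum>i\<in>A. f i) u = (\<Sum>i\<in>A. s (f i) u)"
proof (induction A rule: infinite_finite_induct)
  case (infinite A) then show ?case using cvs_s0l[OF assms] by simp
next
  case empty then show ?case using cvs_s0l[OF assms] by simp
next
  case (insert x F) then show ?case using cvsD(5)[OF assms(1) assms(2)] by simp
qed

lemma cvs_cancel: assumes "cvs s V" "u \<in> V" "a \<noteq> 0" "s a u = 0" shows "u = 0"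
proof -
  have "u = s (inverse a * a) u" using assms(3) cvsD(7)[OF assms(1,2)] by simp
  also have "\<dots> = s (inverse a) (s a u)" using cvsD(6)[OF assms(1,2)] by simp
  also have "\<dots> = 0" using assms(4) cvs_s0r[OF assms(1)] by simp
  finally show ?thesis .
qed

lemma cvs_cancel2: assumes "cvs s V" "u \<in> V" "v \<in> V" "a \<noteq> 0" "s a u = s a v" shows "u = v"
proof -
  have "s a (u - v) = 0" using cvs_sminus[OF assms(1,2,3)] assms(5) by simp
  then show ?thesis using cvs_cancel[OF assms(1) cvs_diff_mem[OF assms(1,2,3)] assms(4)] by simp
qed

section \<open>Finite differences\<close>

fun fd :: "nat \<Rightarrow> (int \<Rightarrow> 'a::ab_group_add) \<Rightarrow> int \<Rightarrow> 'a" where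
  "fd 0 f = f"
| "fd (Suc n) f = fd n (\<lambda>k. f (k + 1) - f k)"

lemma fd_add: "fd n (\<lambda>k. f k + g k) m = fd n f m + fd n g m"
proof (induction n arbitrary: f g m)
  case 0 then show ?case by simp
next
  case (Suc n)
  have "(\<lambda>k. f (k+1) + g (k+1) - (f k + g k)) = (\<lambda>k. (f (k+1) - f k) + (g (k+1) - g k))"
    by (simp add: fun_eq_iff algebra_simps)
  then show ?case using Suc.IH by simp
qed

lemma fd_Suc': "fd (Suc n) f m = fd n f (m + 1) - fd n f m"
proof (induction n arbitrary: f m)
  case 0 then show ?case by simp
next
  case (Suc n)
  have "fd (Suc (Suc n)) f m = fd (Suc n) (\<lambda>k. f (k+1) - f k) m" by (simp only: fd.simps)
  also have "\<dots> = fd n (\<lambda>k. f (k+1) - f k) (m + 1) - fd n (\<lambda>k. f (k+1) - f k) m" by (rule Suc.IH)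
  also have "\<dots> = fd (Suc n) f (m + 1) - fd (Suc n) f m" by (simp only: fd.simps)
  finally show ?case .
qed

lemma fd_zero: "fd n (\<lambda>k. 0) m = 0"
  by (induction n arbitrary: m) auto

lemma fd_cong: "(\<forall>k\<ge>m. f k = g k) \<Longrightarrow> fd n f m = fd n g m"
proof (induction n arbitrary: f g)
  case 0 then show ?case by simp
next
  case (Suc n)
  have "\<forall>k\<ge>m. (f (k + 1) - f k) = (g (k + 1) - g k)" using Suc.prems by simp
  then show ?case using Suc.IH by simp
qed

lemma fd_ge: "(\<forall>k>m. f k = g k) \<Longrightarrow> fd n f m - fd n g m = (if even n then f m - g m else g m - f m)"
proof (induction n arbitrary: f g)
  case 0 then show ?case by simp
next
  case (Suc n)
  have "\<forall>k>m. (f (k + 1) - f k) = (g (k + 1) - g k)" using Suc.prems by simp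
  then have "fd n (\<lambda>k. f (k + 1) - f k) m - fd n (\<lambda>k. g (k + 1) - g k) m =
     (if even n then (f (m + 1) - f m) - (g (m + 1) - g m) else (g (m + 1) - g m) - (f (m + 1) - f m))"
    using Suc.IH[of "\<lambda>k. f (k+1) - f k" "\<lambda>k. g (k+1) - g k"] by simp
  moreover have "f (m + 1) = g (m + 1)" using Suc.prems by simp
  ultimately show ?case by (auto simp: algebra_simps)
qed

lemma fd_ext:
  assumes "\<forall>m. fd n f m = 0" "\<forall>k>M. f k = 0"
  shows "f k = 0"
proof -
  have "\<forall>k>M - int j. f k = 0" for j :: nat
  proof (induction j)
    case 0 then show ?case using assms(2) by simp
  next
    case (Suc j)
    have "fd n f (M - int j) - fd n (\<lambda>k. 0) (M - int j) = (if even n then f (M - int j) - 0 else 0 - f (M - int j))"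
      using fd_ge[of "M - int j" f "\<lambda>k. 0" n] Suc.IH by simp
    then have "f (M - int j) = 0" using assms(1) by (simp add: fd_zero split: if_splits)
    show ?case
    proof (intro allI impI)
      fix k assume "k > M - int (Suc j)"
      then have "k = M - int j \<or> k > M - int j" by linarith
      then show "f k = 0" using Suc.IH \<open>f (M - int j) = 0\<close> by auto
    qed
  qed
  from this[of "nat (M - k + 1)"] show ?thesis by (cases "M - k + 1 \<ge> 0") auto
qed



definition pD :: "complex poly \<Rightarrow> complex poly" where
  "pD q = pcompose q [:1, 1:] - q"

lemma poly_pD: "poly (pD q) x = poly q (x + 1) - poly q x"
  by (simp add: pD_def poly_pcompose add.commute)

lemma pD_deg: "degree q = 0 \<Longrightarrow> pD q = 0" "degree q > 0 \<Longrightarrow> pD q = 0 \<or> degree (pD q) < degree q"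
proof -
  assume "degree q = 0"
  then obtain c where "q = [:c:]" by (metis degree_eq_zeroE)
  then show "pD q = 0" by (simp add: pD_def)
next
  assume a: "degree q > 0"
  have d: "degree (pcompose q [:1, 1:]) = degree q" by (simp add: degree_pcompose)
  have l: "lead_coeff (pcompose q [:1, 1:]) = lead_coeff q" using lead_coeff_comp[of "[:1,1:]" q] by simp
  show "pD q = 0 \<or> degree (pD q) < degree q"
  proof (cases "pD q = 0")
    case False
    have "degree (pD q) \<le> degree q" unfolding pD_def using d by (simp add: degree_diff_le)
    moreover have "coeff (pD q) (degree q) = 0" unfolding pD_def using l d by simp
    ultimately show ?thesis using degree_less_if_less_eqI False by blast
  qed simp
qed

lemma pD_pow_zero: "degree q < n \<Longrightarrow> (pD ^^ n) q = 0"
proof (induction n arbitrary: q)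
  case 0 then show ?case by simp
next
  case (Suc n)
  have "(pD ^^ Suc n) q = (pD ^^ n) (pD q)" by (simp add: funpow_Suc_right del: funpow.simps)
  moreover have "(pD ^^ n) (pD q) = 0"
  proof (cases "degree q = 0")
    case True
    then have "pD q = 0" using pD_deg(1) by blast
    moreover have "(pD ^^ n) 0 = 0" by (induction n) (auto simp: pD_def)
    ultimately show ?thesis by simp
  next
    case False
    then have "pD q = 0 \<or> degree (pD q) < degree q" using pD_deg(2) by blast
    then show ?thesis
    proof
      assume "pD q = 0"
      moreover have "(pD ^^ n) 0 = 0" by (induction n) (auto simp: pD_def)
      ultimately show ?thesis by simp
    next
      assume "degree (pD q) < degree q"
      then show ?thesis using Suc by simp
    qed
  qed
  ultimately show ?case by simp
qed

lemma fd_mono_poly: assumes "cvs s V" "u \<in> V"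
  shows "fd n (\<lambda>k. s (poly q (of_int k)) u) m = s (poly ((pD ^^ n) q) (of_int m)) u"
proof (induction n arbitrary: q m)
  case 0 then show ?case by simp
next
  case (Suc n)
  have "(\<lambda>k. s (poly q (of_int (k + 1))) u - s (poly q (of_int k)) u) = (\<lambda>k. s (poly (pD q) (of_int k)) u)"
    by (simp add: fun_eq_iff poly_pD cvs_sdiff[OF assms])
  then have "fd (Suc n) (\<lambda>k. s (poly q (of_int k)) u) m = fd n (\<lambda>k. s (poly (pD q) (of_int k)) u) m" by simp
  also have "\<dots> = s (poly ((pD ^^ n) (pD q)) (of_int m)) u" by (rule Suc.IH)
  also have "(pD ^^ n) (pD q) = (pD ^^ Suc n) q" by (simp add: funpow_Suc_right del: funpow.simps)
  finally show ?case .
qed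

inductive vpoly :: "(complex \<Rightarrow> 'v::ab_group_add \<Rightarrow> 'v) \<Rightarrow> 'v set \<Rightarrow> (int \<Rightarrow> 'v) \<Rightarrow> bool"
  for s V where
  vp0: "vpoly s V (\<lambda>k. 0)"
| vpm: "u \<in> V \<Longrightarrow> vpoly s V (\<lambda>k. s (poly q (of_int k)) u)"
| vpa: "vpoly s V f \<Longrightarrow> vpoly s V g \<Longrightarrow> vpoly s V (\<lambda>k. f k + g k)"

lemma fd_kill_mono: "\<forall>m. fd n f m = 0 \<Longrightarrow> n \<le> n' \<Longrightarrow> \<forall>m. fd n' f m = 0"
proof (induction n' )
  case 0 then show ?case by simp
next
  case (Suc n')
  show ?case
  proof (cases "n = Suc n'")
    case False
    then have "\<forall>m. fd n' f m = 0" using Suc by simp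
    then show ?thesis by (simp add: fd_Suc' del: fd.simps)
  qed (use Suc in simp)
qed

lemma vpoly_fd: assumes "cvs s V" "vpoly s V f" shows "\<exists>n. \<forall>m. fd n f m = 0"
  using assms(2)
proof induction
  case vp0 then show ?case using fd_zero by blast
next
  case (vpm u q)
  show ?case
    by (rule exI[of _ "Suc (degree q)"]) (use pD_pow_zero[of q "Suc (degree q)"] in \<open>simp del: fd.simps funpow.simps add: fd_mono_poly[OF assms(1) vpm] cvs_s0l[OF assms(1) vpm]\<close>)
next
  case (vpa f g)
  then obtain n1 n2 where "\<forall>m. fd n1 f m = 0" "\<forall>m. fd n2 g m = 0" by blast
  then have "\<forall>m. fd (max n1 n2) f m = 0" "\<forall>m. fd (max n1 n2) g m = 0" using fd_kill_mono by (metis max.cobounded1 max.cobounded2)+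
  then show ?case by (metis fd_add add_0)
qed

lemma vpoly_neg: assumes "cvs s V" "vpoly s V f" shows "vpoly s V (\<lambda>k. - f k)"
  using assms(2)
proof induction
  case vp0 then show ?case using vpoly.vp0 by simp
next
  case (vpm u q)
  have "(\<lambda>k. - s (poly q (of_int k)) u) = (\<lambda>k. s (poly (- q) (of_int k)) u)"
    by (simp add: fun_eq_iff cvs_neg[OF assms(1) vpm])
  then show ?case using vpoly.vpm[OF vpm] by metis
next
  case (vpa f g)
  then show ?case using vpoly.vpa[OF vpa.IH] by (simp add: add.commute)
qed

lemma vpoly_diff: assumes "cvs s V" "vpoly s V f" "vpoly s V g" shows "vpoly s V (\<lambda>k. f k - g k)"
  using vpoly.vpa[OF assms(2) vpoly_neg[OF assms(1,3)]] by simp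

lemma vpoly_ext: assumes "cvs s V" "vpoly s V f" "\<forall>k>M. f k = 0" shows "f k = 0"
  using vpoly_fd[OF assms(1,2)] fd_ext assms(3) by blast

lemma vpoly_ext2: assumes "cvs s V" "vpoly s V f" "vpoly s V g" "\<forall>k>M. f k = g k" shows "f k = g k"
  using vpoly_ext[OF assms(1) vpoly_diff[OF assms(1,2,3)], of M k] assms(4) by simp

lemma fd_exp: assumes "cvs s V" "u \<in> V" "c \<noteq> 0"
  shows "fd n (\<lambda>k. s (a * c powi k) u) m = s (a * (c - 1) ^ n * c powi m) u"
proof (induction n arbitrary: a m)
  case 0 then show ?case by simp
next
  case (Suc n)
  have "(\<lambda>k. s (a * c powi (k + 1)) u - s (a * c powi k) u) = (\<lambda>k. s ((a * (c - 1)) * c powi k) u)"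
    using assms(3) by (simp add: fun_eq_iff cvs_sdiff[OF assms(1,2), symmetric] power_int_add algebra_simps)
  then have "fd (Suc n) (\<lambda>k. s (a * c powi k) u) m = fd n (\<lambda>k. s ((a * (c - 1)) * c powi k) u) m" by simp
  also have "\<dots> = s (a * (c - 1) * (c - 1) ^ n * c powi m) u" by (rule Suc.IH)
  finally show ?case by (simp add: algebra_simps)
qed

lemma vpoly_geom: assumes "cvs s V" "vpoly s V f" "u \<in> V" "u \<noteq> 0" "c \<noteq> 0"
  "\<forall>k>M. f k = s (c powi k) u" shows "c = 1"
proof (rule ccontr)
  assume "c \<noteq> 1"
  obtain n where n: "\<forall>m. fd n f m = 0" using vpoly_fd[OF assms(1,2)] by blast
  have "fd n f (M + 1) = fd n (\<lambda>k. s (1 * c powi k) u) (M + 1)"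
    by (rule fd_cong) (use assms(6) in simp)
  also have "\<dots> = s (1 * (c - 1) ^ n * c powi (M + 1)) u" by (rule fd_exp[OF assms(1,3,5)])
  finally have "s ((c - 1) ^ n * c powi (M + 1)) u = 0" using n by simp
  moreover have "(c - 1) ^ n * c powi (M + 1) \<noteq> 0" using \<open>c \<noteq> 1\<close> assms(5) by simp
  ultimately show False using cvs_cancel[OF assms(1,3)] assms(4) by blast
qed



definition tmono :: "(complex \<Rightarrow> 'v::ab_group_add \<Rightarrow> 'v) \<Rightarrow> nat \<Rightarrow> nat \<Rightarrow> 'v \<Rightarrow> complex \<times> complex \<Rightarrow> 'v" where
  "tmono s a b v = (\<lambda>(x, y). s (x ^ a * y ^ b) v)"

lemma gmodD:
  assumes "gmod s V \<rho>"
  shows "cvs s V" "\<And>e x. x \<in> V \<Longrightarrow> \<rho> e x \<in> V"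
    "\<And>e x y. x \<in> V \<Longrightarrow> y \<in> V \<Longrightarrow> \<rho> e (x + y) = \<rho> e x + \<rho> e y"
    "\<And>e c x. x \<in> V \<Longrightarrow> \<rho> e (s c x) = s c (\<rho> e x)"
  using assms unfolding gmod_def by blast+

lemma gmod_rho0: assumes "gmod s V \<rho>" shows "\<rho> e 0 = 0"
proof -
  have "0 \<in> V" using cvsD(1)[OF gmodD(1)[OF assms]] .
  then have "\<rho> e (0 + 0) = \<rho> e 0 + \<rho> e 0" using gmodD(3)[OF assms] by blast
  then show ?thesis by simp
qed

lemma tcar_vals: assumes "cvs s V" "F \<in> tcar s V" shows "F p \<in> V"
proof -
  obtain A c where A: "finite A" "\<forall>ab\<in>A. c ab \<in> V" "F = (\<lambda>(x, y). \<Sum>ab\<in>A. s (x ^ fst ab * y ^ snd ab) (c ab))"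
    using assms(2) unfolding tcar_def by blast
  then have "F p = (\<Sum>ab\<in>A. s (fst p ^ fst ab * snd p ^ snd ab) (c ab))" by (cases p) simp
  moreover have "(\<Sum>ab\<in>A. s (fst p ^ fst ab * snd p ^ snd ab) (c ab)) \<in> V"
    by (rule cvs_sum_mem[OF assms(1)]) (use cvsD(3)[OF assms(1)] A(2) in blast)
  ultimately show ?thesis by simp
qed

lemma tcar_zero: "(\<lambda>p. 0) \<in> tcar s V"
  unfolding tcar_def by (rule CollectI, rule exI[of _ "{}"]) auto

lemma tcar_mono: "v \<in> V \<Longrightarrow> tmono s a b v \<in> tcar s V"
  unfolding tcar_def tmono_def by (rule CollectI, rule exI[of _ "{(a,b)}"], rule exI[of _ "\<lambda>_. v"]) auto

lemma tcar_add: assumes "cvs s V" "F \<in> tcar s V" "G \<in> tcar s V" shows "(\<lambda>p. F p + G p) \<in> tcar s V"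
proof -
  obtain A c where A: "finite A" "\<forall>ab\<in>A. c ab \<in> V" "F = (\<lambda>(x, y). \<Sum>ab\<in>A. s (x ^ fst ab * y ^ snd ab) (c ab))"
    using assms(2) unfolding tcar_def by blast
  obtain B d where B: "finite B" "\<forall>ab\<in>B. d ab \<in> V" "G = (\<lambda>(x, y). \<Sum>ab\<in>B. s (x ^ fst ab * y ^ snd ab) (d ab))"
    using assms(3) unfolding tcar_def by blast
  define c' where "c' ab = (if ab \<in> A then c ab else 0)" for ab
  define d' where "d' ab = (if ab \<in> B then d ab else 0)" for ab
  have c'V: "c' ab \<in> V" for ab using A(2) cvsD(1)[OF assms(1)] unfolding c'_def by auto
  have d'V: "d' ab \<in> V" for ab using B(2) cvsD(1)[OF assms(1)] unfolding d'_def by auto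
  have fin: "finite (A \<union> B)" using A(1) B(1) by simp
  have "(\<lambda>p. F p + G p) = (\<lambda>(x, y). \<Sum>ab\<in>A \<union> B. s (x ^ fst ab * y ^ snd ab) (c' ab + d' ab))"
  proof (rule ext, clarify)
    fix x y
    have e1: "(\<Sum>ab\<in>A \<union> B. s (x ^ fst ab * y ^ snd ab) (c' ab)) = (\<Sum>ab\<in>A. s (x ^ fst ab * y ^ snd ab) (c ab))"
    proof -
      have "(\<Sum>ab\<in>A \<union> B. s (x ^ fst ab * y ^ snd ab) (c' ab)) = (\<Sum>ab\<in>A. s (x ^ fst ab * y ^ snd ab) (c' ab))"
        by (rule sum.mono_neutral_right[OF fin]) (auto simp: c'_def cvs_s0r[OF assms(1)])
      also have "\<dots> = (\<Sum>ab\<in>A. s (x ^ fst ab * y ^ snd ab) (c ab))" by (rule sum.cong) (auto simp: c'_def)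
      finally show ?thesis .
    qed
    have e2: "(\<Sum>ab\<in>A \<union> B. s (x ^ fst ab * y ^ snd ab) (d' ab)) = (\<Sum>ab\<in>B. s (x ^ fst ab * y ^ snd ab) (d ab))"
    proof -
      have "(\<Sum>ab\<in>A \<union> B. s (x ^ fst ab * y ^ snd ab) (d' ab)) = (\<Sum>ab\<in>B. s (x ^ fst ab * y ^ snd ab) (d' ab))"
        by (rule sum.mono_neutral_right[OF fin]) (auto simp: d'_def cvs_s0r[OF assms(1)])
      also have "\<dots> = (\<Sum>ab\<in>B. s (x ^ fst ab * y ^ snd ab) (d ab))" by (rule sum.cong) (auto simp: d'_def)
      finally show ?thesis .
    qed
    have "(\<Sum>ab\<in>A \<union> B. s (x ^ fst ab * y ^ snd ab) (c' ab + d' ab)) =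
      (\<Sum>ab\<in>A \<union> B. s (x ^ fst ab * y ^ snd ab) (c' ab)) + (\<Sum>ab\<in>A \<union> B. s (x ^ fst ab * y ^ snd ab) (d' ab))"
      using cvsD(4)[OF assms(1) c'V d'V] by (simp add: sum.distrib)
    then show "F (x, y) + G (x, y) = (\<Sum>ab\<in>A \<union> B. s (x ^ fst ab * y ^ snd ab) (c' ab + d' ab))"
      using e1 e2 A(3) B(3) by simp
  qed
  moreover have "\<forall>ab\<in>A \<union> B. c' ab + d' ab \<in> V" using c'V d'V cvsD(2)[OF assms(1)] by blast
  ultimately show ?thesis unfolding tcar_def
    apply (intro CollectI exI[of _ "A \<union> B"] exI[of _ "\<lambda>ab. c' ab + d' ab"])
    using fin by blast
qed

lemma tcar_induct[consumes 2, case_names zero mono add]: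
  assumes "cvs s V" "F \<in> tcar s V" "P (\<lambda>p. 0)" "\<And>a b v. v \<in> V \<Longrightarrow> P (tmono s a b v)"
    "\<And>F G. F \<in> tcar s V \<Longrightarrow> G \<in> tcar s V \<Longrightarrow> P F \<Longrightarrow> P G \<Longrightarrow> P (\<lambda>p. F p + G p)"
  shows "P F"
proof -
  obtain A c where A: "finite A" "\<forall>ab\<in>A. c ab \<in> V" "F = (\<lambda>(x, y). \<Sum>ab\<in>A. s (x ^ fst ab * y ^ snd ab) (c ab))"
    using assms(2) unfolding tcar_def by blast
  have "P (\<lambda>(x, y). \<Sum>ab\<in>A. s (x ^ fst ab * y ^ snd ab) (c ab))"
    using A(1,2)
  proof (induction A rule: finite_induct)
    case empty
    have "(\<lambda>(x, y). \<Sum>ab\<in>{}. s (x ^ fst ab * y ^ snd ab) (c ab)) = (\<lambda>p. 0)" by auto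
    then show ?case using assms(3) by simp
  next
    case (insert ab A)
    have eq: "(\<lambda>(x, y). \<Sum>ab\<in>insert ab A. s (x ^ fst ab * y ^ snd ab) (c ab)) =
       (\<lambda>p. tmono s (fst ab) (snd ab) (c ab) p + (\<lambda>(x, y). \<Sum>ab\<in>A. s (x ^ fst ab * y ^ snd ab) (c ab)) p)"
      using insert(1,2) by (auto simp: fun_eq_iff tmono_def)
    have m: "tmono s (fst ab) (snd ab) (c ab) \<in> tcar s V" using insert(4) by (intro tcar_mono) simp
    have r: "(\<lambda>(x, y). \<Sum>ab\<in>A. s (x ^ fst ab * y ^ snd ab) (c ab)) \<in> tcar s V"
      unfolding tcar_def using insert(1,4) by blast
    show ?case unfolding eq by (rule assms(5)[OF m r assms(4)]) (use insert in auto)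
  qed
  then show ?thesis using A(3) by simp
qed

lemma tcar_const: "v \<in> V \<Longrightarrow> cvs s V \<Longrightarrow> (\<lambda>p. v) \<in> tcar s V"
proof -
  assume "v \<in> V" "cvs s V"
  then have "tmono s 0 0 v = (\<lambda>p. v)" by (auto simp: tmono_def fun_eq_iff cvsD(7))
  then show ?thesis using tcar_mono[OF \<open>v \<in> V\<close>, of s 0 0] by simp
qed

lemma tcar_smul: assumes "cvs s V" "F \<in> tcar s V" shows "(\<lambda>p. s c (F p)) \<in> tcar s V"
  using assms
proof (induction rule: tcar_induct)
  case zero then show ?case using tcar_zero cvs_s0r[OF assms(1)] by simp
next
  case (mono a b v)
  have "(\<lambda>p. s c (tmono s a b v p)) = tmono s a b (s c v)"
    using mono cvsD(6)[OF assms(1)] by (auto simp: tmono_def fun_eq_iff mult.commute)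
  then show ?case using tcar_mono cvsD(3)[OF assms(1) mono] by metis
next
  case (add F G)
  have "(\<lambda>p. s c (F p + G p)) = (\<lambda>p. s c (F p) + s c (G p))"
    using cvsD(4)[OF assms(1)] tcar_vals[OF assms(1)] add(1,2) by (auto simp: fun_eq_iff)
  then show ?case using tcar_add[OF assms(1) add(3,4)] by simp
qed

lemma tcar_X: assumes "cvs s V" "F \<in> tcar s V" shows "(\<lambda>p. s (fst p) (F p)) \<in> tcar s V"
  using assms
proof (induction rule: tcar_induct)
  case zero then show ?case using tcar_zero cvs_s0r[OF assms(1)] by simp
next
  case (mono a b v)
  have "(\<lambda>p. s (fst p) (tmono s a b v p)) = tmono s (Suc a) b v"
    using mono cvsD(6)[OF assms(1)] by (auto simp: tmono_def fun_eq_iff mult.commute mult.left_commute)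
  then show ?case using tcar_mono[OF mono] by metis
next
  case (add F G)
  have "(\<lambda>p. s (fst p) (F p + G p)) = (\<lambda>p. s (fst p) (F p) + s (fst p) (G p))"
    using cvsD(4)[OF assms(1)] tcar_vals[OF assms(1)] add(1,2) by (auto simp: fun_eq_iff)
  then show ?case using tcar_add[OF assms(1) add(3,4)] by simp
qed

lemma tcar_Y: assumes "cvs s V" "F \<in> tcar s V" shows "(\<lambda>p. s (snd p) (F p)) \<in> tcar s V"
  using assms
proof (induction rule: tcar_induct)
  case zero then show ?case using tcar_zero cvs_s0r[OF assms(1)] by simp
next
  case (mono a b v)
  have "(\<lambda>p. s (snd p) (tmono s a b v p)) = tmono s a (Suc b) v"
    using mono cvsD(6)[OF assms(1)] by (auto simp: tmono_def fun_eq_iff mult.commute mult.left_commute)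
  then show ?case using tcar_mono[OF mono] by metis
next
  case (add F G)
  have "(\<lambda>p. s (snd p) (F p + G p)) = (\<lambda>p. s (snd p) (F p) + s (snd p) (G p))"
    using cvsD(4)[OF assms(1)] tcar_vals[OF assms(1)] add(1,2) by (auto simp: fun_eq_iff)
  then show ?case using tcar_add[OF assms(1) add(3,4)] by simp
qed

inductive pfun :: "(complex \<times> complex \<Rightarrow> complex) \<Rightarrow> bool" where
  pc: "pfun (\<lambda>p. c)"
| px: "pfun fst"
| py: "pfun snd"
| padd: "pfun P \<Longrightarrow> pfun Q \<Longrightarrow> pfun (\<lambda>p. P p + Q p)"
| pmul: "pfun P \<Longrightarrow> pfun Q \<Longrightarrow> pfun (\<lambda>p. P p * Q p)"

lemma pfun_pow: "pfun P \<Longrightarrow> pfun (\<lambda>p. P p ^ n)"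
  by (induction n) (auto intro: pfun.intros)

lemma tcar_pmul: assumes "cvs s V" "pfun P" "F \<in> tcar s V" shows "(\<lambda>p. s (P p) (F p)) \<in> tcar s V"
  using assms(2,3)
proof (induction arbitrary: F)
  case (pc c) then show ?case using tcar_smul[OF assms(1)] by blast
next
  case px then show ?case using tcar_X[OF assms(1)] by blast
next
  case py then show ?case using tcar_Y[OF assms(1)] by blast
next
  case (padd P Q)
  have "(\<lambda>p. s (P p + Q p) (F p)) = (\<lambda>p. s (P p) (F p) + s (Q p) (F p))"
    using cvsD(5)[OF assms(1)] tcar_vals[OF assms(1) padd(5)] by (auto simp: fun_eq_iff)
  then show ?case using tcar_add[OF assms(1) padd(3)[OF padd(5)] padd(4)[OF padd(5)]] by simp
next
  case (pmul P Q)
  have "(\<lambda>p. s (P p * Q p) (F p)) = (\<lambda>p. s (P p) (s (Q p) (F p)))"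
    using cvsD(6)[OF assms(1)] tcar_vals[OF assms(1) pmul(5)] by (auto simp: fun_eq_iff)
  then show ?case using pmul(3)[OF pmul(4)[OF pmul(5)]] by simp
qed

lemma tcar_rho: assumes "gmod s V \<rho>" "F \<in> tcar s V" shows "(\<lambda>p. \<rho> e (F p)) \<in> tcar s V"
proof -
  have cv: "cvs s V" using gmodD(1)[OF assms(1)] .
  show ?thesis using cv assms(2)
  proof (induction rule: tcar_induct)
    case zero then show ?case using tcar_zero gmod_rho0[OF assms(1)] by simp
  next
    case (mono a b v)
    have "(\<lambda>p. \<rho> e (tmono s a b v p)) = tmono s a b (\<rho> e v)"
      using mono gmodD(4)[OF assms(1)] by (auto simp: tmono_def fun_eq_iff)
    then show ?case using tcar_mono gmodD(2)[OF assms(1) mono] by metis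
  next
    case (add F G)
    have "(\<lambda>p. \<rho> e (F p + G p)) = (\<lambda>p. \<rho> e (F p) + \<rho> e (G p))"
      using gmodD(3)[OF assms(1)] tcar_vals[OF cv] add(1,2) by (auto simp: fun_eq_iff)
    then show ?case using tcar_add[OF cv add(3,4)] by simp
  qed
qed

lemma tcar_decomp: assumes "cvs s V" "F \<in> tcar s V"
  shows "\<exists>A B. A \<in> tcar s V \<and> B \<in> tcar s V \<and> F = (\<lambda>p. F (0, 0) + s (fst p) (A p) + s (snd p) (B p))"
  using assms
proof (induction rule: tcar_induct)
  case zero
  show ?case by (rule exI[of _ "\<lambda>p. 0"], rule exI[of _ "\<lambda>p. 0"]) (simp add: tcar_zero cvs_s0r[OF assms(1)])
next
  case (mono a b v)
  show ?case
  proof (cases a)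
    case (Suc a')
    have h1: "tmono s a b v = (\<lambda>p. 0 + s (fst p) (tmono s a' b v p) + s (snd p) ((\<lambda>p. 0) p))"
      using mono cvsD(6)[OF assms(1)] Suc by (auto simp: tmono_def fun_eq_iff cvs_s0r[OF assms(1)] mult.assoc)
    have h2: "tmono s a b v (0, 0) = 0" using Suc cvs_s0l[OF assms(1) mono] by (simp add: tmono_def)
    have h3: "tmono s a b v = (\<lambda>p. tmono s a b v (0, 0) + s (fst p) (tmono s a' b v p) + s (snd p) ((\<lambda>p. 0) p))"
      by (subst h2) (rule h1)
    show ?thesis
      by (intro exI[of _ "tmono s a' b v"] exI[of _ "\<lambda>p. 0"] conjI tcar_mono[OF mono] tcar_zero h3)
  next
    case 0
    show ?thesis
    proof (cases b)
      case (Suc b')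
      have h1: "tmono s a b v = (\<lambda>p. 0 + s (fst p) ((\<lambda>p. 0) p) + s (snd p) (tmono s a b' v p))"
        using mono cvsD(6)[OF assms(1)] Suc 0 by (auto simp: tmono_def fun_eq_iff cvs_s0r[OF assms(1)])
      have h2: "tmono s a b v (0, 0) = 0" using Suc cvs_s0l[OF assms(1) mono] by (simp add: tmono_def)
      have h3: "tmono s a b v = (\<lambda>p. tmono s a b v (0, 0) + s (fst p) ((\<lambda>p. 0) p) + s (snd p) (tmono s a b' v p))"
        by (subst h2) (rule h1)
      show ?thesis
        by (intro exI[of _ "\<lambda>p. 0"] exI[of _ "tmono s a b' v"] conjI tcar_mono[OF mono] tcar_zero h3)
    next
      case b0: 0
      have h3: "tmono s a b v = (\<lambda>p. tmono s a b v (0, 0) + s (fst p) ((\<lambda>p. 0) p) + s (snd p) ((\<lambda>p. 0) p))"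
        using mono b0 0 by (auto simp: tmono_def fun_eq_iff cvs_s0r[OF assms(1)])
      show ?thesis
        by (intro exI[of _ "\<lambda>p. 0"] exI[of _ "\<lambda>p. 0"] conjI tcar_zero h3)
    qed
  qed
next
  case (add F G)
  obtain A1 B1 where 1: "A1 \<in> tcar s V" "B1 \<in> tcar s V" "F = (\<lambda>p. F (0, 0) + s (fst p) (A1 p) + s (snd p) (B1 p))"
    using add(3) by blast
  obtain A2 B2 where 2: "A2 \<in> tcar s V" "B2 \<in> tcar s V" "G = (\<lambda>p. G (0, 0) + s (fst p) (A2 p) + s (snd p) (B2 p))"
    using add(4) by blast
  have "(\<lambda>p. F p + G p) = (\<lambda>p. (F (0,0) + G (0,0)) + s (fst p) (A1 p + A2 p) + s (snd p) (B1 p + B2 p))"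
  proof (rule ext)
    fix p
    have "F p + G p = (F (0, 0) + s (fst p) (A1 p) + s (snd p) (B1 p)) + (G (0, 0) + s (fst p) (A2 p) + s (snd p) (B2 p))"
      using 1(3) 2(3) by metis
    then show "F p + G p = (F (0,0) + G (0,0)) + s (fst p) (A1 p + A2 p) + s (snd p) (B1 p + B2 p)"
      using cvsD(4)[OF assms(1)] tcar_vals[OF assms(1)] 1(1,2) 2(1,2) by (simp add: algebra_simps)
  qed
  then show ?case
    by (intro exI[of _ "\<lambda>p. A1 p + A2 p"] exI[of _ "\<lambda>p. B1 p + B2 p"] conjI tcar_add[OF assms(1) 1(1) 2(1)] tcar_add[OF assms(1) 1(2) 2(2)]) simp
qed

definition killed :: "(gbasis \<Rightarrow> 'v::ab_group_add \<Rightarrow> 'v) \<Rightarrow> nat \<Rightarrow> 'v \<Rightarrow> bool" where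
  "killed \<rho> N u \<longleftrightarrow> (\<forall>i::int. i > int N \<longrightarrow> \<rho> (L i) u = 0 \<and> \<rho> (H i) u = 0 \<and> \<rho> (I i) u = 0 \<and> \<rho> (J i) u = 0)"

lemma killed_mono: "killed \<rho> N u \<Longrightarrow> N \<le> N' \<Longrightarrow> killed \<rho> N' u"
  unfolding killed_def by auto

lemma tcar_killed: assumes "gmod s V \<rho>" "restricted_gmod V \<rho>" "F \<in> tcar s V"
  shows "\<exists>N. \<forall>p. killed \<rho> N (F p)"
proof -
  have cv: "cvs s V" using gmodD(1)[OF assms(1)] .
  show ?thesis using cv assms(3)
  proof (induction rule: tcar_induct)
    case zero then show ?case using gmod_rho0[OF assms(1)] by (auto simp: killed_def)
  next
    case (mono a b v)
    obtain N where "killed \<rho> N v" using assms(2) mono unfolding restricted_gmod_def killed_def by blast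
    then have "killed \<rho> N (tmono s a b v p)" for p
      using gmodD(4)[OF assms(1) mono] cvs_s0r[OF cv] by (cases p) (simp add: killed_def tmono_def)
    then show ?case by blast
  next
    case (add F G)
    obtain N1 N2 where "\<forall>p. killed \<rho> N1 (F p)" "\<forall>p. killed \<rho> N2 (G p)" using add by blast
    then have "\<forall>p. killed \<rho> (max N1 N2) (F p)" "\<forall>p. killed \<rho> (max N1 N2) (G p)"
      using killed_mono by (metis max.cobounded1 max.cobounded2)+
    have "killed \<rho> (max N1 N2) (F p + G p)" for p
    proof -
      have k: "killed \<rho> (max N1 N2) (F p)" "killed \<rho> (max N1 N2) (G p)" using \<open>\<forall>p. killed \<rho> (max N1 N2) (F p)\<close> \<open>\<forall>p. killed \<rho> (max N1 N2) (G p)\<close> by blast+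
      show ?thesis using k gmodD(3)[OF assms(1) tcar_vals[OF cv add(1)] tcar_vals[OF cv add(2)]] unfolding killed_def by simp
    qed
    then show ?case by blast
  qed
qed



inductive pfun3 :: "(complex \<Rightarrow> complex \<times> complex \<Rightarrow> complex) \<Rightarrow> bool" where
  qc: "pfun3 (\<lambda>k p. c)"
| qk: "pfun3 (\<lambda>k p. k)"
| qx: "pfun3 (\<lambda>k p. fst p)"
| qy: "pfun3 (\<lambda>k p. snd p)"
| qadd: "pfun3 P \<Longrightarrow> pfun3 Q \<Longrightarrow> pfun3 (\<lambda>k p. P k p + Q k p)"
| qmul: "pfun3 P \<Longrightarrow> pfun3 Q \<Longrightarrow> pfun3 (\<lambda>k p. P k p * Q k p)"

lemma pfun3_pow: "pfun3 P \<Longrightarrow> pfun3 (\<lambda>k p. P k p ^ n)"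
  by (induction n) (auto intro: pfun3.intros)

lemma pfun3_diff: "pfun3 P \<Longrightarrow> pfun3 Q \<Longrightarrow> pfun3 (\<lambda>k p. P k p - Q k p)"
proof -
  assume "pfun3 P" "pfun3 Q"
  then have "pfun3 (\<lambda>k p. P k p + (-1) * Q k p)" by (intro pfun3.intros)
  then show ?thesis by simp
qed

inductive tpoly :: "(complex \<Rightarrow> 'v::ab_group_add \<Rightarrow> 'v) \<Rightarrow> 'v set \<Rightarrow> (int \<Rightarrow> complex \<times> complex \<Rightarrow> 'v) \<Rightarrow> bool"
  for s V where
  tp0: "tpoly s V (\<lambda>k p. 0)"
| tpm: "W \<in> tcar s V \<Longrightarrow> tpoly s V (\<lambda>k p. s (poly q (of_int k)) (W p))"
| tpa: "tpoly s V F \<Longrightarrow> tpoly s V G \<Longrightarrow> tpoly s V (\<lambda>k p. F k p + G k p)"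

lemma tpoly_tcar: assumes "cvs s V" "tpoly s V F" shows "F k \<in> tcar s V"
  using assms(2)
proof induction
  case tp0 then show ?case by (simp add: tcar_zero)
next
  case (tpm W q) then show ?case using tcar_smul[OF assms(1)] by blast
next
  case (tpa F G) then show ?case using tcar_add[OF assms(1)] by blast
qed

lemma tpoly_vpoly: assumes "cvs s V" "tpoly s V F" shows "vpoly s V (\<lambda>k. F k p)"
  using assms(2)
proof induction
  case tp0 then show ?case by (rule vp0)
next
  case (tpm W q) then show ?case using vpm tcar_vals[OF assms(1)] by blast
next
  case (tpa F G) then show ?case using vpa by blast
qed

lemma tpoly_map:
  assumes "cvs s V" "tpoly s V F"
    "\<And>W q. W \<in> tcar s V \<Longrightarrow> tpoly s V (\<lambda>k p. g k p (s (poly q (of_int k)) (W p)))"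
    "\<And>k p. g k p 0 = 0"
    "\<And>k p u v. u \<in> V \<Longrightarrow> v \<in> V \<Longrightarrow> g k p (u + v) = g k p u + g k p v"
  shows "tpoly s V (\<lambda>k p. g k p (F k p))"
  using assms(2)
proof induction
  case tp0 then show ?case using assms(4) tpoly.tp0 by simp
next
  case (tpm W q) then show ?case using assms(3) by blast
next
  case (tpa F G)
  have "(\<lambda>k p. g k p (F k p + G k p)) = (\<lambda>k p. g k p (F k p) + g k p (G k p))"
    using assms(5) tcar_vals[OF assms(1) tpoly_tcar[OF assms(1)]] tpa(1,2) by (simp add: fun_eq_iff)
  then show ?case using tpoly.tpa[OF tpa(3,4)] by simp
qed

lemma tpoly_mul: assumes "cvs s V" "pfun3 P" "tpoly s V F"
  shows "tpoly s V (\<lambda>k p. s (P (of_int k) p) (F k p))"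
  using assms(2,3)
proof (induction arbitrary: F)
  case (qc c)
  show ?case
  proof (rule tpoly_map[OF assms(1) qc])
    fix W q assume W: "W \<in> tcar s V"
    have "(\<lambda>k p. s c (s (poly q (of_int k)) (W p))) = (\<lambda>k p. s (poly q (of_int k)) ((\<lambda>p. s c (W p)) p))"
      using cvsD(6)[OF assms(1)] tcar_vals[OF assms(1) W] by (simp add: fun_eq_iff mult.commute)
    then show "tpoly s V (\<lambda>k p. s c (s (poly q (of_int k)) (W p)))" using tpm[OF tcar_smul[OF assms(1) W]] by simp
  qed (use cvs_s0r[OF assms(1)] cvsD(4)[OF assms(1)] in auto)
next
  case qk
  show ?case
  proof (rule tpoly_map[OF assms(1) qk])
    fix W q assume W: "W \<in> tcar s V"
    have "(\<lambda>k p. s (of_int k) (s (poly q (of_int k)) (W p))) = (\<lambda>k p. s (poly ([:0, 1:] * q) (of_int k)) (W p))"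
      using cvsD(6)[OF assms(1)] tcar_vals[OF assms(1) W] by (simp add: fun_eq_iff)
    then show "tpoly s V (\<lambda>k p. s (of_int k) (s (poly q (of_int k)) (W p)))" using tpm[OF W, of "[:0, 1:] * q"] by (simp only:)
  qed (use cvs_s0r[OF assms(1)] cvsD(4)[OF assms(1)] in auto)
next
  case qx
  show ?case
  proof (rule tpoly_map[OF assms(1) qx])
    fix W q assume W: "W \<in> tcar s V"
    have "(\<lambda>k p. s (fst p) (s (poly q (of_int k)) (W p))) = (\<lambda>k p. s (poly q (of_int k)) ((\<lambda>p. s (fst p) (W p)) p))"
      using cvsD(6)[OF assms(1)] tcar_vals[OF assms(1) W] by (simp add: fun_eq_iff mult.commute)
    then show "tpoly s V (\<lambda>k p. s (fst p) (s (poly q (of_int k)) (W p)))" using tpm[OF tcar_X[OF assms(1) W]] by simp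
  qed (use cvs_s0r[OF assms(1)] cvsD(4)[OF assms(1)] in auto)
next
  case qy
  show ?case
  proof (rule tpoly_map[OF assms(1) qy])
    fix W q assume W: "W \<in> tcar s V"
    have "(\<lambda>k p. s (snd p) (s (poly q (of_int k)) (W p))) = (\<lambda>k p. s (poly q (of_int k)) ((\<lambda>p. s (snd p) (W p)) p))"
      using cvsD(6)[OF assms(1)] tcar_vals[OF assms(1) W] by (simp add: fun_eq_iff mult.commute)
    then show "tpoly s V (\<lambda>k p. s (snd p) (s (poly q (of_int k)) (W p)))" using tpm[OF tcar_Y[OF assms(1) W]] by simp
  qed (use cvs_s0r[OF assms(1)] cvsD(4)[OF assms(1)] in auto)
next
  case (qadd P Q)
  have "(\<lambda>k p. s (P (of_int k) p + Q (of_int k) p) (F k p)) = (\<lambda>k p. s (P (of_int k) p) (F k p) + s (Q (of_int k) p) (F k p))"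
    using cvsD(5)[OF assms(1)] tcar_vals[OF assms(1) tpoly_tcar[OF assms(1) qadd(5)]] by (simp add: fun_eq_iff)
  then show ?case using tpoly.tpa[OF qadd(3)[OF qadd(5)] qadd(4)[OF qadd(5)]] by simp
next
  case (qmul P Q)
  have "(\<lambda>k p. s (P (of_int k) p * Q (of_int k) p) (F k p)) = (\<lambda>k p. s (P (of_int k) p) (s (Q (of_int k) p) (F k p)))"
    using cvsD(6)[OF assms(1)] tcar_vals[OF assms(1) tpoly_tcar[OF assms(1) qmul(5)]] by (simp add: fun_eq_iff)
  then show ?case using qmul(3)[OF qmul(4)[OF qmul(5)]] by simp
qed

lemma tpoly_const: assumes "cvs s V" "v \<in> V" shows "tpoly s V (\<lambda>k p. v)"
proof -
  have h: "s 1 v = v" using cvsD(7)[OF assms] by simp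
  show ?thesis using tpm[OF tcar_const[OF assms(2,1)], of 1] h by simp
qed

lemma tpoly_shift: assumes "cvs s V" "pfun3 P" "w \<in> tcar s V"
  shows "tpoly s V (\<lambda>k p. s (P (of_int k) p) (w (fst p - d1 - of_int k * e1, snd p - d2 - of_int k * e2)))"
  using assms(1,3)
proof (induction rule: tcar_induct)
  case zero then show ?case using tp0 cvs_s0r[OF assms(1)] by simp
next
  case (mono a b v)
  define Q where "Q = (\<lambda>k p. P k p * ((fst p - d1 - k * e1) ^ a * (snd p - d2 - k * e2) ^ b))"
  have "pfun3 Q" unfolding Q_def
    by (intro pfun3.intros pfun3_pow pfun3_diff assms(2))
  have "(\<lambda>k p. s (P (of_int k) p) (tmono s a b v (fst p - d1 - of_int k * e1, snd p - d2 - of_int k * e2)))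
     = (\<lambda>k p. s (Q (of_int k) p) ((\<lambda>k p. v) k p))"
    using cvsD(6)[OF assms(1) mono] by (simp add: fun_eq_iff tmono_def Q_def)
  then show ?case using tpoly_mul[OF assms(1) \<open>pfun3 Q\<close> tpoly_const[OF assms(1) mono]] by simp
next
  case (add F G)
  have "(\<lambda>k p. s (P (of_int k) p) (F (fst p - d1 - of_int k * e1, snd p - d2 - of_int k * e2) + G (fst p - d1 - of_int k * e1, snd p - d2 - of_int k * e2)))
    = (\<lambda>k p. s (P (of_int k) p) (F (fst p - d1 - of_int k * e1, snd p - d2 - of_int k * e2)) + s (P (of_int k) p) (G (fst p - d1 - of_int k * e1, snd p - d2 - of_int k * e2)))"
    by (simp add: fun_eq_iff cvsD(4)[OF assms(1) tcar_vals[OF assms(1) add(1)] tcar_vals[OF assms(1) add(2)]])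
  then show ?case using tpoly.tpa[OF add(3,4)] by simp
qed

lemma tpoly_phi:
  assumes "cvs s1 V1" "cvs s2 V2"
    "\<forall>x\<in>tcar s1 V1. \<phi> x \<in> tcar s2 V2"
    "\<forall>x\<in>tcar s1 V1. \<forall>y\<in>tcar s1 V1. \<phi> (\<lambda>p. x p + y p) = (\<lambda>p. \<phi> x p + \<phi> y p)"
    "\<forall>c. \<forall>x\<in>tcar s1 V1. \<phi> (\<lambda>p. s1 c (x p)) = (\<lambda>p. s2 c (\<phi> x p))"
    "tpoly s1 V1 F"
  shows "tpoly s2 V2 (\<lambda>k. \<phi> (F k))"
  using assms(6)
proof induction
  case tp0
  have z: "(\<lambda>p::complex\<times>complex. 0) \<in> tcar s1 V1" by (rule tcar_zero)
  have "\<phi> (\<lambda>p. 0) = (\<lambda>p. \<phi> (\<lambda>p. 0) p + \<phi> (\<lambda>p. 0) p)" using assms(4)[rule_format, OF z z] by simp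
  then have "\<phi> (\<lambda>p. 0) p = 0" for p using fun_cong[of _ _ p] by (metis add_cancel_left_right)
  then have "\<phi> (\<lambda>p. 0) = (\<lambda>p. 0)" by (rule ext)
  then show ?case using tpoly.tp0 by simp
next
  case (tpm W q)
  have "(\<lambda>k. \<phi> (\<lambda>p. s1 (poly q (of_int k)) (W p))) = (\<lambda>k p. s2 (poly q (of_int k)) (\<phi> W p))"
    using assms(5) tpm by simp
  then show ?case using tpoly.tpm assms(3) tpm by metis
next
  case (tpa F G)
  have "(\<lambda>k. \<phi> (\<lambda>p. F k p + G k p)) = (\<lambda>k p. \<phi> (F k) p + \<phi> (G k) p)"
    using assms(4) tpoly_tcar[OF assms(1)] tpa(1,2) by simp
  then show ?case using tpoly.tpa[OF tpa(3,4)] by simp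
qed



definition ompart :: "(complex \<Rightarrow> 'v::ab_group_add \<Rightarrow> 'v) \<Rightarrow> complex \<Rightarrow> complex \<Rightarrow> complex \<Rightarrow> complex
    \<Rightarrow> gbasis \<Rightarrow> (complex \<times> complex \<Rightarrow> 'v) \<Rightarrow> (complex \<times> complex \<Rightarrow> 'v)" where
  "ompart s lam eta sig eps e F = (\<lambda>p. case e of
       L m \<Rightarrow> s (lam powi m * (snd p - eps * of_int m * fst p + of_int m * eta)) (F (fst p, snd p - of_int m))
     | H m \<Rightarrow> s (lam powi m * fst p) (F (fst p, snd p - of_int m))
     | I m \<Rightarrow> (if eps = 1 then s (lam powi m * sig) (F (fst p - eps, snd p - of_int m)) else 0)
     | J m \<Rightarrow> (if eps = 1 then 0 else s (lam powi m * sig) (F (fst p - eps, snd p - of_int m)))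
     | _ \<Rightarrow> 0)"

definition gact where
  "gact s \<rho> lam eta sig eps = (\<lambda>e F p. ompart s lam eta sig eps e F p + \<rho> e (F p))"

lemma omegaA_gen: "omegaA_tensor s \<rho> lam eta sig = gact s \<rho> lam eta sig 1"
  by (auto simp: fun_eq_iff omegaA_tensor_def gact_def ompart_def split: gbasis.split)

lemma omegaB_gen: "omegaB_tensor s \<rho> lam eta sig = gact s \<rho> lam eta sig (-1)"
  by (auto simp: fun_eq_iff omegaB_tensor_def gact_def ompart_def split: gbasis.split)

definition Om :: "(complex \<Rightarrow> 'v::ab_group_add \<Rightarrow> 'v) \<Rightarrow> (complex \<Rightarrow> complex \<times> complex \<Rightarrow> complex)
   \<Rightarrow> complex \<Rightarrow> complex \<Rightarrow> complex \<Rightarrow> complex \<Rightarrow> int \<Rightarrow> (complex \<times> complex \<Rightarrow> 'v) \<Rightarrow> (complex \<times> complex \<Rightarrow> 'v)" where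
  "Om s P d1 e1 d2 e2 k w = (\<lambda>p. s (P (of_int k) p) (w (fst p - d1 - of_int k * e1, snd p - d2 - of_int k * e2)))"

lemma Om_tpoly: "cvs s V \<Longrightarrow> pfun3 P \<Longrightarrow> w \<in> tcar s V \<Longrightarrow> tpoly s V (\<lambda>k. Om s P d1 e1 d2 e2 k w)"
  unfolding Om_def by (rule tpoly_shift)

lemma Om_tcar: "cvs s V \<Longrightarrow> pfun3 P \<Longrightarrow> w \<in> tcar s V \<Longrightarrow> Om s P d1 e1 d2 e2 k w \<in> tcar s V"
  using tpoly_tcar Om_tpoly by blast

definition linmap where
  "linmap s1 V1 s2 V2 \<phi> \<longleftrightarrow> (\<forall>x\<in>tcar s1 V1. \<phi> x \<in> tcar s2 V2)
    \<and> (\<forall>x\<in>tcar s1 V1. \<forall>y\<in>tcar s1 V1. \<phi> (\<lambda>p. x p + y p) = (\<lambda>p. \<phi> x p + \<phi> y p))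
    \<and> (\<forall>c. \<forall>x\<in>tcar s1 V1. \<phi> (\<lambda>p. s1 c (x p)) = (\<lambda>p. s2 c (\<phi> x p)))"

lemma om_ext:
  assumes "cvs s1 V1" "cvs s2 V2" "linmap s1 V1 s2 V2 \<phi>" "pfun3 P" "pfun3 P'" "w \<in> tcar s1 V1"
    "\<forall>k>M. \<phi> (Om s1 P d1 e1 d2 e2 k w) = Om s2 P' d1 e1 d2 e2 k (\<phi> w)"
  shows "\<phi> (Om s1 P d1 e1 d2 e2 k w) = Om s2 P' d1 e1 d2 e2 k (\<phi> w)"
proof (rule ext)
  fix p
  have l: "\<forall>x\<in>tcar s1 V1. \<phi> x \<in> tcar s2 V2"
    "\<forall>x\<in>tcar s1 V1. \<forall>y\<in>tcar s1 V1. \<phi> (\<lambda>p. x p + y p) = (\<lambda>p. \<phi> x p + \<phi> y p)"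
    "\<forall>c. \<forall>x\<in>tcar s1 V1. \<phi> (\<lambda>p. s1 c (x p)) = (\<lambda>p. s2 c (\<phi> x p))"
    using assms(3) unfolding linmap_def by blast+
  have t1: "tpoly s2 V2 (\<lambda>k. \<phi> (Om s1 P d1 e1 d2 e2 k w))"
    by (rule tpoly_phi[OF assms(1,2) l Om_tpoly[OF assms(1,4,6)]])
  have t2: "tpoly s2 V2 (\<lambda>k. Om s2 P' d1 e1 d2 e2 k (\<phi> w))"
    by (rule Om_tpoly[OF assms(2,5)]) (use l(1) assms(6) in blast)
  show "\<phi> (Om s1 P d1 e1 d2 e2 k w) p = Om s2 P' d1 e1 d2 e2 k (\<phi> w) p"
    by (rule vpoly_ext2[OF assms(2) tpoly_vpoly[OF assms(2) t1] tpoly_vpoly[OF assms(2) t2], of M])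
       (use assms(7) in simp)
qed



definition Kop :: "complex \<Rightarrow> int \<Rightarrow> gbasis" where
  "Kop eps k = (if eps = 1 then I k else J k)"

lemma gact_H: assumes "cvs s V" "w \<in> tcar s V"
  shows "gact s \<rho> lam eta sig eps (H k) w p = s (lam powi k) (Om s (\<lambda>k p. fst p) 0 0 0 1 k w p) + \<rho> (H k) (w p)"
  using cvsD(6)[OF assms(1) tcar_vals[OF assms]] by (simp add: gact_def ompart_def Om_def)

lemma gact_L: assumes "cvs s V" "w \<in> tcar s V"
  shows "gact s \<rho> lam eta sig eps (L k) w p = s (lam powi k) (Om s (\<lambda>k p. snd p - eps * k * fst p + k * eta) 0 0 0 1 k w p) + \<rho> (L k) (w p)"
  using cvsD(6)[OF assms(1) tcar_vals[OF assms]] by (simp add: gact_def ompart_def Om_def)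

lemma gact_K: assumes "cvs s V" "w \<in> tcar s V"
  shows "gact s \<rho> lam eta sig eps (Kop eps k) w p = s (lam powi k) (Om s (\<lambda>k p. sig) eps 0 0 1 k w p) + \<rho> (Kop eps k) (w p)"
  using cvsD(6)[OF assms(1) tcar_vals[OF assms]] by (simp add: gact_def ompart_def Om_def Kop_def)

lemma gact_other: assumes "cvs s V" "w \<in> tcar s V" "\<forall>k. e \<noteq> H k \<and> e \<noteq> L k \<and> e \<noteq> Kop eps k" "eps = 1 \<or> eps = -1"
  shows "gact s \<rho> lam eta sig eps e w p = s 0 (w p) + \<rho> e (w p)"
proof -
  have "ompart s lam eta sig eps e w p = 0"
    using assms(3,4) unfolding ompart_def Kop_def by (cases e) auto
  then show ?thesis using cvs_s0l[OF assms(1) tcar_vals[OF assms(1,2)]] by (simp add: gact_def)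
qed

lemma transfer:
  assumes cR: "cvs sR VR" and cS: "cvs sS VS" and lin: "linmap sR VR sS VS \<phi>"
    and intw: "\<forall>e. \<forall>x\<in>tcar sR VR. \<phi> (actR e x) = actS e (\<phi> x)"
    and gR: "gmod sR VR \<rho>R" and rR: "restricted_gmod VR \<rho>R"
    and gS: "gmod sS VS \<rho>S" and rS: "restricted_gmod VS \<rho>S"
    and P: "pfun3 P" "pfun3 P'" and lam: "lam \<noteq> 0"
    and eR: "\<forall>w\<in>tcar sR VR. \<forall>k p. actR (ek k) w p = sR (lam powi k) (Om sR P d1 e1 d2 e2 k w p) + \<rho>R (ek k) (w p)"
    and eS: "\<forall>w\<in>tcar sS VS. \<forall>k p. actS (ek k) w p = sS (lam powi k) (Om sS P' d1 e1 d2 e2 k w p) + \<rho>S (ek k) (w p)"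
    and kR: "\<forall>N u k. killed \<rho>R N u \<longrightarrow> k > int N \<longrightarrow> \<rho>R (ek k) u = 0"
    and kS: "\<forall>N u k. killed \<rho>S N u \<longrightarrow> k > int N \<longrightarrow> \<rho>S (ek k) u = 0"
    and w: "w \<in> tcar sR VR"
  shows "\<phi> (Om sR P d1 e1 d2 e2 k w) = Om sS P' d1 e1 d2 e2 k (\<phi> w)"
proof -
  have l: "\<forall>x\<in>tcar sR VR. \<phi> x \<in> tcar sS VS"
    "\<forall>x\<in>tcar sR VR. \<forall>y\<in>tcar sR VR. \<phi> (\<lambda>p. x p + y p) = (\<lambda>p. \<phi> x p + \<phi> y p)"
    "\<forall>c. \<forall>x\<in>tcar sR VR. \<phi> (\<lambda>p. sR c (x p)) = (\<lambda>p. sS c (\<phi> x p))"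
    using lin unfolding linmap_def by blast+
  have pw: "\<phi> w \<in> tcar sS VS" using l(1) w by blast
  obtain N1 where N1: "\<forall>p. killed \<rho>R N1 (w p)" using tcar_killed[OF gR rR w] by blast
  obtain N2 where N2: "\<forall>p. killed \<rho>S N2 (\<phi> w p)" using tcar_killed[OF gS rS pw] by blast
  have big: "\<phi> (Om sR P d1 e1 d2 e2 k w) = Om sS P' d1 e1 d2 e2 k (\<phi> w)" if k: "k > int (max N1 N2)" for k
  proof -
    have kk1: "killed \<rho>R (max N1 N2) (w p)" for p using N1 killed_mono by (metis max.cobounded1)
    have kk2: "killed \<rho>S (max N1 N2) (\<phi> w p)" for p using N2 killed_mono by (metis max.cobounded2)
    have z1: "\<rho>R (ek k) (w p) = 0" for p using kR kk1 k by blast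
    have z2: "\<rho>S (ek k) (\<phi> w p) = 0" for p using kS kk2 k by blast
    have a1: "actR (ek k) w = (\<lambda>p. sR (lam powi k) (Om sR P d1 e1 d2 e2 k w p))"
      by (rule ext) (simp add: eR[rule_format, OF w] z1)
    have a2: "actS (ek k) (\<phi> w) = (\<lambda>p. sS (lam powi k) (Om sS P' d1 e1 d2 e2 k (\<phi> w) p))"
      by (rule ext) (simp add: eS[rule_format, OF pw] z2)
    have om: "Om sR P d1 e1 d2 e2 k w \<in> tcar sR VR" by (rule Om_tcar[OF cR P(1) w])
    have pom: "\<phi> (Om sR P d1 e1 d2 e2 k w) \<in> tcar sS VS" using l(1) om by blast
    have om2: "Om sS P' d1 e1 d2 e2 k (\<phi> w) \<in> tcar sS VS" by (rule Om_tcar[OF cS P(2) pw])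
    have "(\<lambda>p. sS (lam powi k) (\<phi> (Om sR P d1 e1 d2 e2 k w) p)) = \<phi> (actR (ek k) w)"
      using a1 l(3) om by simp
    also have "\<dots> = actS (ek k) (\<phi> w)" using intw w by blast
    finally have eq: "(\<lambda>p. sS (lam powi k) (\<phi> (Om sR P d1 e1 d2 e2 k w) p)) = (\<lambda>p. sS (lam powi k) (Om sS P' d1 e1 d2 e2 k (\<phi> w) p))"
      using a2 by simp
    show ?thesis
    proof (rule ext)
      fix p
      show "\<phi> (Om sR P d1 e1 d2 e2 k w) p = Om sS P' d1 e1 d2 e2 k (\<phi> w) p"
        by (rule cvs_cancel2[OF cS tcar_vals[OF cS pom] tcar_vals[OF cS om2], of "lam powi k"])
           (use lam fun_cong[OF eq, of p] in simp_all)
    qed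
  qed
  show ?thesis
    by (rule om_ext[OF cR cS lin P w, of "int (max N1 N2)"]) (use big in blast)
qed

lemma phi_pmul:
  assumes cR: "cvs sR VR" and cS: "cvs sS VS" and lin: "linmap sR VR sS VS \<phi>"
    and X: "\<forall>w\<in>tcar sR VR. \<phi> (\<lambda>p. sR (fst p) (w p)) = (\<lambda>p. sS (fst p) (\<phi> w p))"
    and Y: "\<forall>w\<in>tcar sR VR. \<phi> (\<lambda>p. sR (snd p) (w p)) = (\<lambda>p. sS (snd p) (\<phi> w p))"
    and Q: "pfun Q"
  shows "\<forall>w\<in>tcar sR VR. \<phi> (\<lambda>p. sR (Q p) (w p)) = (\<lambda>p. sS (Q p) (\<phi> w p))"
  using Q
proof induction
  case (pc c) then show ?case using lin unfolding linmap_def by blast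
next
  case px then show ?case using X by simp
next
  case py then show ?case using Y by simp
next
  case (padd P Q)
  show ?case
  proof
    fix w assume w: "w \<in> tcar sR VR"
    have pw: "\<phi> w \<in> tcar sS VS" using lin w unfolding linmap_def by blast
    have "(\<lambda>p. sR (P p + Q p) (w p)) = (\<lambda>p. (\<lambda>p. sR (P p) (w p)) p + (\<lambda>p. sR (Q p) (w p)) p)"
      using cvsD(5)[OF cR tcar_vals[OF cR w]] by simp
    then have "\<phi> (\<lambda>p. sR (P p + Q p) (w p)) = (\<lambda>p. \<phi> (\<lambda>p. sR (P p) (w p)) p + \<phi> (\<lambda>p. sR (Q p) (w p)) p)"
      using lin tcar_pmul[OF cR padd(1) w] tcar_pmul[OF cR padd(2) w] unfolding linmap_def by simp
    also have "\<dots> = (\<lambda>p. sS (P p + Q p) (\<phi> w p))"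
      using padd(3,4) w cvsD(5)[OF cS tcar_vals[OF cS pw]] by simp
    finally show "\<phi> (\<lambda>p. sR (P p + Q p) (w p)) = (\<lambda>p. sS (P p + Q p) (\<phi> w p))" .
  qed
next
  case (pmul P Q)
  show ?case
  proof
    fix w assume w: "w \<in> tcar sR VR"
    have pw: "\<phi> w \<in> tcar sS VS" using lin w unfolding linmap_def by blast
    have "(\<lambda>p. sR (P p * Q p) (w p)) = (\<lambda>p. sR (P p) ((\<lambda>p. sR (Q p) (w p)) p))"
      using cvsD(6)[OF cR tcar_vals[OF cR w]] by simp
    then have "\<phi> (\<lambda>p. sR (P p * Q p) (w p)) = (\<lambda>p. sS (P p) (\<phi> (\<lambda>p. sR (Q p) (w p)) p))"
      using pmul(3) tcar_pmul[OF cR pmul(2) w] by simp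
    also have "\<dots> = (\<lambda>p. sS (P p * Q p) (\<phi> w p))"
      using pmul(4) w cvsD(6)[OF cS tcar_vals[OF cS pw]] by simp
    finally show "\<phi> (\<lambda>p. sR (P p * Q p) (w p)) = (\<lambda>p. sS (P p * Q p) (\<phi> w p))" .
  qed
qed

lemma rho_transfer:
  assumes cR: "cvs sR VR" and cS: "cvs sS VS" and lin: "linmap sR VR sS VS \<phi>"
    and intw: "\<forall>e. \<forall>x\<in>tcar sR VR. \<phi> (actR e x) = actS e (\<phi> x)"
    and gR: "gmod sR VR \<rho>R"
    and w: "w \<in> tcar sR VR" and A: "A \<in> tcar sR VR" and B: "\<phi> A = B"
    and eR: "\<forall>p. actR e w p = sR a (A p) + \<rho>R e (w p)"
    and eS: "\<forall>p. actS e (\<phi> w) p = sS a (B p) + \<rho>S e (\<phi> w p)"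
  shows "\<phi> (\<lambda>p. \<rho>R e (w p)) = (\<lambda>p. \<rho>S e (\<phi> w p))"
proof -
  have l: "\<forall>x\<in>tcar sR VR. \<phi> x \<in> tcar sS VS"
    "\<forall>x\<in>tcar sR VR. \<forall>y\<in>tcar sR VR. \<phi> (\<lambda>p. x p + y p) = (\<lambda>p. \<phi> x p + \<phi> y p)"
    "\<forall>c. \<forall>x\<in>tcar sR VR. \<phi> (\<lambda>p. sR c (x p)) = (\<lambda>p. sS c (\<phi> x p))"
    using lin unfolding linmap_def by blast+
  have r: "(\<lambda>p. \<rho>R e (w p)) \<in> tcar sR VR" by (rule tcar_rho[OF gR w])
  have sa: "(\<lambda>p. sR a (A p)) \<in> tcar sR VR" by (rule tcar_smul[OF cR A])
  have "actR e w = (\<lambda>p. (\<lambda>p. sR a (A p)) p + (\<lambda>p. \<rho>R e (w p)) p)" using eR by (simp add: fun_eq_iff)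
  then have "\<phi> (actR e w) = (\<lambda>p. \<phi> (\<lambda>p. sR a (A p)) p + \<phi> (\<lambda>p. \<rho>R e (w p)) p)"
    using l(2) r sa by simp
  also have "\<phi> (\<lambda>p. sR a (A p)) = (\<lambda>p. sS a (B p))" using l(3) A B by simp
  finally have "\<phi> (actR e w) = (\<lambda>p. sS a (B p) + \<phi> (\<lambda>p. \<rho>R e (w p)) p)" .
  moreover have "\<phi> (actR e w) = actS e (\<phi> w)" using intw w by blast
  ultimately have "sS a (B p) + \<phi> (\<lambda>p. \<rho>R e (w p)) p = sS a (B p) + \<rho>S e (\<phi> w p)" for p
    using eS by (metis)
  then show ?thesis by (simp add: fun_eq_iff)
qed



lemma iso_unpack:
  assumes "gmod_iso (tsmul sR) (tcar sR VR) actR (tsmul sS) (tcar sS VS) actS"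
  obtains \<phi> where "bij_betw \<phi> (tcar sR VR) (tcar sS VS)" "linmap sR VR sS VS \<phi>"
    "\<forall>e. \<forall>x\<in>tcar sR VR. \<phi> (actR e x) = actS e (\<phi> x)"
proof -
  obtain \<phi> where b: "bij_betw \<phi> (tcar sR VR) (tcar sS VS)"
    and a: "\<forall>x\<in>tcar sR VR. \<forall>y\<in>tcar sR VR. \<phi> (x + y) = \<phi> x + \<phi> y"
    and m: "\<forall>c. \<forall>x\<in>tcar sR VR. \<phi> (tsmul sR c x) = tsmul sS c (\<phi> x)"
    and i: "\<forall>e. \<forall>x\<in>tcar sR VR. \<phi> (actR e x) = actS e (\<phi> x)"
    using assms unfolding gmod_iso_def by blast
  have "linmap sR VR sS VS \<phi>"
    unfolding linmap_def
    using bij_betwE[OF b] a m by (simp add: tsmul_def func_plus)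
  then show ?thesis using that b i by blast
qed

lemma phi_zero: assumes "linmap sR VR sS VS \<phi>" shows "\<phi> (\<lambda>p. 0) = (\<lambda>p. 0)"
proof -
  have z: "(\<lambda>p::complex\<times>complex. 0) \<in> tcar sR VR" by (rule tcar_zero)
  have a: "\<forall>x\<in>tcar sR VR. \<forall>y\<in>tcar sR VR. \<phi> (\<lambda>p. x p + y p) = (\<lambda>p. \<phi> x p + \<phi> y p)"
    using assms unfolding linmap_def by blast
  have "\<phi> (\<lambda>p. 0) = (\<lambda>p. \<phi> (\<lambda>p. 0) p + \<phi> (\<lambda>p. 0) p)"
    using a[rule_format, OF z z] by simp
  then have "\<phi> (\<lambda>p. 0) p = 0" for p using fun_cong[of _ _ p] by (metis add_cancel_left_right)
  then show ?thesis by (rule ext)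
qed

lemma nonzero_elem: assumes "cvs s V" "V \<noteq> {0}" obtains v where "v \<in> V" "v \<noteq> 0"
  using assms cvsD(1)[OF assms(1)] by blast

lemma forward:
  assumes eps: "eps = 1 \<or> eps = -1"
    and lam: "lam \<noteq> 0" "lam1 \<noteq> 0" and sig: "sig \<noteq> 0" "sig1 \<noteq> 0"
    and gR: "gmod sR VR \<rho>R" and rR: "restricted_gmod VR \<rho>R" and nR: "VR \<noteq> {0}"
    and gS: "gmod sS VS \<rho>S" and rS: "restricted_gmod VS \<rho>S" and nS: "VS \<noteq> {0}"
    and iso: "gmod_iso (tsmul sR) (tcar sR VR) (gact sR \<rho>R lam eta sig eps)
                       (tsmul sS) (tcar sS VS) (gact sS \<rho>S lam1 eta1 sig1 eps)"
  shows "lam = lam1 \<and> eta = eta1 \<and> sig = sig1 \<and> gmod_iso sR VR \<rho>R sS VS \<rho>S"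
proof -
  have cR: "cvs sR VR" using gmodD(1)[OF gR] .
  have cS: "cvs sS VS" using gmodD(1)[OF gS] .
  obtain \<phi> where bij: "bij_betw \<phi> (tcar sR VR) (tcar sS VS)" and lin: "linmap sR VR sS VS \<phi>"
    and intw: "\<forall>e. \<forall>x\<in>tcar sR VR. \<phi> (gact sR \<rho>R lam eta sig eps e x) = gact sS \<rho>S lam1 eta1 sig1 eps e (\<phi> x)"
    using iso_unpack[OF iso] by blast
  have l: "\<forall>x\<in>tcar sR VR. \<phi> x \<in> tcar sS VS"
    "\<forall>x\<in>tcar sR VR. \<forall>y\<in>tcar sR VR. \<phi> (\<lambda>p. x p + y p) = (\<lambda>p. \<phi> x p + \<phi> y p)"
    "\<forall>c. \<forall>x\<in>tcar sR VR. \<phi> (\<lambda>p. sR c (x p)) = (\<lambda>p. sS c (\<phi> x p))"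
    using lin unfolding linmap_def by blast+
  have inj: "inj_on \<phi> (tcar sR VR)" using bij_betw_imp_inj_on[OF bij] .
  have surj: "\<phi> ` tcar sR VR = tcar sS VS" using bij_betw_imp_surj_on[OF bij] .
  have p0: "\<phi> (\<lambda>p. 0) = (\<lambda>p. 0)" by (rule phi_zero[OF lin])
  have nz: "\<phi> w \<noteq> (\<lambda>p. 0)" if "w \<in> tcar sR VR" "w \<noteq> (\<lambda>p. 0)" for w
  proof
    assume "\<phi> w = (\<lambda>p. 0)"
    then have "\<phi> w = \<phi> (\<lambda>p. 0)" using p0 by simp
    then have "w = (\<lambda>p. 0)" using inj_onD[OF inj _ that(1) tcar_zero] by blast
    then show False using that(2) by simp
  qed
  obtain v0 where v0: "v0 \<in> VR" "v0 \<noteq> 0" using nonzero_elem[OF cR nR] by blast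
  obtain u0 where u0: "u0 \<in> VS" "u0 \<noteq> 0" using nonzero_elem[OF cS nS] by blast
  have w0: "(\<lambda>p. v0) \<in> tcar sR VR" by (rule tcar_const[OF v0(1) cR])
  have Gw0: "\<phi> (\<lambda>p. v0) \<in> tcar sS VS" using l(1) w0 by blast
  have Gnz: "\<phi> (\<lambda>p. v0) \<noteq> (\<lambda>p. 0)" using nz[OF w0] v0(2) by metis
  have lam_eq: "lam = lam1"
  proof -
    define Xv where "Xv = (\<lambda>p::complex\<times>complex. sR (fst p) v0)"
    have Xv: "Xv \<in> tcar sR VR" unfolding Xv_def using tcar_X[OF cR w0] by simp
    have Xvnz: "Xv \<noteq> (\<lambda>p. 0)"
    proof
      assume "Xv = (\<lambda>p. 0)"
      then have "Xv (1, 0) = 0" by simp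
      then show False using v0 cvsD(7)[OF cR] unfolding Xv_def by simp
    qed
    define U where "U = \<phi> Xv"
    have U: "U \<in> tcar sS VS" unfolding U_def using l(1) Xv by blast
    obtain p1 where p1: "U p1 \<noteq> 0" using nz[OF Xv Xvnz] unfolding U_def by (metis ext)
    define G where "G = \<phi> (\<lambda>p. v0)"
    obtain N1 where N1: "killed \<rho>R N1 v0" using tcar_killed[OF gR rR w0] by blast
    obtain N2 where N2: "\<forall>p. killed \<rho>S N2 (G p)" using tcar_killed[OF gS rS Gw0] unfolding G_def by blast
    define M where "M = int (max N1 N2)"
    define c where "c = lam / lam1"
    have key: "Om sS (\<lambda>k p. fst p) 0 0 0 1 k G p1 = sS (c powi k) (U p1)" if k: "k > M" for k
    proof -
      have kk1: "killed \<rho>R (max N1 N2) v0" using N1 killed_mono by (metis max.cobounded1)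
      have kk2: "killed \<rho>S (max N1 N2) (G p)" for p using N2 killed_mono by (metis max.cobounded2)
      have z1: "\<rho>R (H k) v0 = 0" using kk1 k unfolding killed_def M_def by blast
      have z2: "\<rho>S (H k) (G p) = 0" for p using kk2 k unfolding killed_def M_def by blast
      have a1: "gact sR \<rho>R lam eta sig eps (H k) (\<lambda>p. v0) = (\<lambda>p. sR (lam powi k) (Xv p))"
        by (rule ext) (simp add: gact_H[OF cR w0] z1 Om_def Xv_def)
      have a2: "gact sS \<rho>S lam1 eta1 sig1 eps (H k) G = (\<lambda>p. sS (lam1 powi k) (Om sS (\<lambda>k p. fst p) 0 0 0 1 k G p))"
        by (rule ext) (simp add: gact_H[OF cS Gw0[folded G_def]] z2)
      have "(\<lambda>p. sS (lam powi k) (U p)) = \<phi> (gact sR \<rho>R lam eta sig eps (H k) (\<lambda>p. v0))"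
        using a1 l(3) Xv unfolding U_def by simp
      also have "\<dots> = gact sS \<rho>S lam1 eta1 sig1 eps (H k) G" using intw w0 unfolding G_def by blast
      finally have "sS (lam powi k) (U p1) = sS (lam1 powi k) (Om sS (\<lambda>k p. fst p) 0 0 0 1 k G p1)"
        using a2 by metis
      then have "sS (inverse (lam1 powi k)) (sS (lam powi k) (U p1)) = sS (inverse (lam1 powi k)) (sS (lam1 powi k) (Om sS (\<lambda>k p. fst p) 0 0 0 1 k G p1))"
        by simp
      moreover have "Om sS (\<lambda>k p. fst p) 0 0 0 1 k G p1 \<in> VS"
        by (rule tcar_vals[OF cS Om_tcar[OF cS pfun3.qx Gw0[folded G_def]]])
      ultimately show ?thesis
        using cvsD(6,7)[OF cS] tcar_vals[OF cS U] lam(2) unfolding c_def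
        by (simp add: power_int_divide_distrib field_simps)
    qed
    have vp: "vpoly sS VS (\<lambda>k. Om sS (\<lambda>k p. fst p) 0 0 0 1 k G p1)"
      by (rule tpoly_vpoly[OF cS Om_tpoly[OF cS pfun3.qx Gw0[folded G_def]]])
    have "c = 1"
      by (rule vpoly_geom[OF cS vp tcar_vals[OF cS U] p1 _ allI[OF impI[OF key]]]) (use lam c_def in auto)
    then show ?thesis using lam unfolding c_def by simp
  qed
  have killH: "\<forall>N u k. killed \<rho> N u \<longrightarrow> k > int N \<longrightarrow> \<rho> (H k) u = 0" for \<rho> :: "gbasis \<Rightarrow> 'x::ab_group_add \<Rightarrow> 'x"
    unfolding killed_def by blast
  have killL: "\<forall>N u k. killed \<rho> N u \<longrightarrow> k > int N \<longrightarrow> \<rho> (L k) u = 0" for \<rho> :: "gbasis \<Rightarrow> 'x::ab_group_add \<Rightarrow> 'x"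
    unfolding killed_def by blast
  have killK: "\<forall>N u k. killed \<rho> N u \<longrightarrow> k > int N \<longrightarrow> \<rho> (Kop eps k) u = 0" for \<rho> :: "gbasis \<Rightarrow> 'x::ab_group_add \<Rightarrow> 'x"
    unfolding killed_def Kop_def by auto
  have pL: "pfun3 (\<lambda>k p. snd p - eps * k * fst p + k * e)" for e
    by (intro pfun3.intros pfun3_diff)
  have transH: "\<phi> (Om sR (\<lambda>k p. fst p) 0 0 0 1 k w) = Om sS (\<lambda>k p. fst p) 0 0 0 1 k (\<phi> w)"
    if "w \<in> tcar sR VR" for w k
    by (rule transfer[where ek=H, OF cR cS lin intw gR rR gS rS pfun3.qx pfun3.qx lam(1) _ _ killH killH that])
       (simp_all add: gact_H[OF cR] gact_H[OF cS] lam_eq)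
  have transL: "\<phi> (Om sR (\<lambda>k p. snd p - eps * k * fst p + k * eta) 0 0 0 1 k w)
       = Om sS (\<lambda>k p. snd p - eps * k * fst p + k * eta1) 0 0 0 1 k (\<phi> w)"
    if "w \<in> tcar sR VR" for w k
    by (rule transfer[where ek=L, OF cR cS lin intw gR rR gS rS pL pL lam(1) _ _ killL killL that])
       (simp_all add: gact_L[OF cR] gact_L[OF cS] lam_eq)
  have transK: "\<phi> (Om sR (\<lambda>k p. sig) eps 0 0 1 k w) = Om sS (\<lambda>k p. sig1) eps 0 0 1 k (\<phi> w)"
    if "w \<in> tcar sR VR" for w k
    by (rule transfer[where ek="Kop eps", OF cR cS lin intw gR rR gS rS pfun3.qc pfun3.qc lam(1) _ _ killK killK that])
       (simp_all add: gact_K[OF cR] gact_K[OF cS] lam_eq)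
  have Xlin: "\<forall>w\<in>tcar sR VR. \<phi> (\<lambda>p. sR (fst p) (w p)) = (\<lambda>p. sS (fst p) (\<phi> w p))"
    using transH[of _ 0] by (simp add: Om_def)
  have Ylin: "\<forall>w\<in>tcar sR VR. \<phi> (\<lambda>p. sR (snd p) (w p)) = (\<lambda>p. sS (snd p) (\<phi> w p))"
    using transL[of _ 0] by (simp add: Om_def)
  have eta_eq: "eta = eta1"
  proof -
    have cu: "(\<lambda>p::complex\<times>complex. u0) \<in> tcar sS VS" by (rule tcar_const[OF u0(1) cS])
    then obtain w1 where w1: "w1 \<in> tcar sR VR" "\<phi> w1 = (\<lambda>p. u0)" using surj by (metis imageE)
    define Z where "Z = Om sR (\<lambda>k p. fst p) 0 0 0 1 1 w1"
    define LL where "LL = Om sR (\<lambda>k p. snd p - eps * k * fst p + k * eta) 0 0 0 1 1 w1"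
    have Z: "Z \<in> tcar sR VR" unfolding Z_def by (rule Om_tcar[OF cR pfun3.qx w1(1)])
    have LL: "LL \<in> tcar sR VR" unfolding LL_def by (rule Om_tcar[OF cR pL w1(1)])
    have pZ: "\<phi> Z = (\<lambda>p. sS (fst p) u0)" unfolding Z_def using transH[OF w1(1), of 1] w1(2) by (simp add: Om_def)
    have pLL: "\<phi> LL = (\<lambda>p. sS (snd p - eps * fst p + eta1) u0)"
      unfolding LL_def using transL[OF w1(1), of 1] w1(2) by (simp add: Om_def)
    define Q where "Q = (\<lambda>p::complex\<times>complex. snd p - eps * fst p + eta)"
    have pQ: "pfun Q"
    proof -
      have "pfun (\<lambda>p. snd p + (- eps) * fst p + eta)" by (intro pfun.intros)
      then show ?thesis unfolding Q_def by simp
    qed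
    have ident: "(\<lambda>p. sR (fst p) (LL p)) = (\<lambda>p. sR (Q p) (Z p))"
      unfolding LL_def Z_def Q_def Om_def
      using cvsD(6)[OF cR tcar_vals[OF cR w1(1)]] by (simp add: fun_eq_iff mult.commute)
    have "(\<lambda>p. sS (fst p) (\<phi> LL p)) = (\<lambda>p. sS (Q p) (\<phi> Z p))"
      using Xlin LL phi_pmul[OF cR cS lin Xlin Ylin pQ] Z ident by metis
    then have "sS 1 (\<phi> LL (1, 0)) = sS (Q (1, 0)) (\<phi> Z (1, 0))" by (metis fst_conv)
    then have "sS (- eps + eta1) u0 = sS (- eps + eta) u0"
      unfolding pLL pZ Q_def using cvsD(7)[OF cS] cvsD(3)[OF cS u0(1)] cvsD(6)[OF cS u0(1)] u0(1) by simp
    then have "sS ((- eps + eta1) - (- eps + eta)) u0 = 0" using cvs_sdiff[OF cS u0(1)] by simp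
    then have "(- eps + eta1) - (- eps + eta) = 0" using cvs_cancel[OF cS u0(1)] u0(2) by blast
    then show ?thesis by simp
  qed
  have sig_eq: "sig = sig1"
  proof -
    define G where "G = \<phi> (\<lambda>p. v0)"
    have GS: "G \<in> tcar sS VS" using Gw0 unfolding G_def .
    have "\<phi> (Om sR (\<lambda>k p. sig) eps 0 0 1 0 (\<lambda>p. v0)) = Om sS (\<lambda>k p. sig1) eps 0 0 1 0 G"
      using transK[OF w0, of 0] unfolding G_def .
    moreover have "Om sR (\<lambda>k p. sig) eps 0 0 1 0 (\<lambda>p. v0) = (\<lambda>p. sR sig ((\<lambda>p. v0) p))" by (simp add: Om_def)
    moreover have "\<phi> (\<lambda>p. sR sig ((\<lambda>p. v0) p)) = (\<lambda>p. sS sig (\<phi> (\<lambda>p. v0) p))"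
      by (rule l(3)[rule_format, OF w0])
    ultimately have eq: "(\<lambda>p. sS sig (G p)) = Om sS (\<lambda>k p. sig1) eps 0 0 1 0 G"
      unfolding G_def by simp
    have rel0: "sS sig (G p) = sS sig1 (G (fst p - eps, snd p))" for p
      using fun_cong[OF eq, of p] by (simp add: Om_def)
    define c where "c = sig / sig1"
    have rel: "G (fst p - eps, snd p) = sS c (G p)" for p
    proof -
      have "sS (inverse sig1) (sS sig (G p)) = sS (inverse sig1) (sS sig1 (G (fst p - eps, snd p)))"
        using rel0 by simp
      then show ?thesis
        using cvsD(6,7)[OF cS] tcar_vals[OF cS GS] sig unfolding c_def by (simp add: field_simps)
    qed
    obtain p0 where p0: "G p0 \<noteq> 0" using Gnz unfolding G_def by (metis ext)
    define f where "f = (\<lambda>k. Om sS (\<lambda>k p. 1) 0 eps 0 0 k G p0)"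
    have vp: "vpoly sS VS f" unfolding f_def by (rule tpoly_vpoly[OF cS Om_tpoly[OF cS pfun3.qc GS]])
    have fk: "f k = G (fst p0 - of_int k * eps, snd p0)" for k
      unfolding f_def Om_def using cvsD(7)[OF cS tcar_vals[OF cS GS]] by simp
    have fn: "f (int n) = sS (c ^ n) (G p0)" for n
    proof (induction n)
      case 0 then show ?case using fk cvsD(7)[OF cS tcar_vals[OF cS GS]] by simp
    next
      case (Suc n)
      have "f (int (Suc n)) = G (fst (fst p0 - of_nat n * eps, snd p0) - eps, snd (fst p0 - of_nat n * eps, snd p0))"
        using fk by (simp add: algebra_simps)
      also have "\<dots> = sS c (G (fst p0 - of_nat n * eps, snd p0))" by (rule rel)
      also have "\<dots> = sS c (f (int n))" using fk by simp
      also have "\<dots> = sS (c ^ Suc n) (G p0)" using Suc cvsD(6)[OF cS tcar_vals[OF cS GS]] by simp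
      finally show ?case .
    qed
    have geo: "\<forall>k>0. f k = sS (c powi k) (G p0)"
    proof (intro allI impI)
      fix k :: int assume "k > 0"
      then have "k = int (nat k)" by simp
      then show "f k = sS (c powi k) (G p0)" using fn[of "nat k"] by (metis power_int_of_nat)
    qed
    have "c = 1"
      by (rule vpoly_geom[OF cS vp tcar_vals[OF cS GS] p0 _ geo]) (use sig c_def in auto)
    then show ?thesis using sig unfolding c_def by simp
  qed
  have rhoT: "\<phi> (\<lambda>p. \<rho>R e (w p)) = (\<lambda>p. \<rho>S e (\<phi> w p))" if w: "w \<in> tcar sR VR" for e w
  proof -
    have pw: "\<phi> w \<in> tcar sS VS" using l(1) w by blast
    consider (h) k where "e = H k" | (lc) k where "e = L k" | (kc) k where "e = Kop eps k"
      | (ot) "\<forall>k. e \<noteq> H k \<and> e \<noteq> L k \<and> e \<noteq> Kop eps k" by blast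
    then show ?thesis
    proof cases
      case h
      show ?thesis
        by (rule rho_transfer[where a="lam powi k", OF cR cS lin intw gR w Om_tcar[OF cR pfun3.qx w] transH[OF w, of k]])
           (simp_all add: h gact_H[OF cR w] gact_H[OF cS pw] lam_eq)
    next
      case lc
      show ?thesis
        by (rule rho_transfer[where a="lam powi k", OF cR cS lin intw gR w Om_tcar[OF cR pL w] transL[OF w, of k]])
           (simp_all add: lc gact_L[OF cR w] gact_L[OF cS pw] lam_eq)
    next
      case kc
      show ?thesis
        by (rule rho_transfer[where a="lam powi k", OF cR cS lin intw gR w Om_tcar[OF cR pfun3.qc w] transK[OF w, of k]])
           (simp_all add: kc gact_K[OF cR w] gact_K[OF cS pw] lam_eq)
    next
      case ot
      show ?thesis
        by (rule rho_transfer[where a=0, OF cR cS lin intw gR w w refl])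
           (simp_all add: gact_other[OF cR w ot eps] gact_other[OF cS pw ot eps])
    qed
  qed
  define \<psi> where "\<psi> v = \<phi> (\<lambda>p. v) (0, 0)" for v
  have cst: "(\<lambda>p::complex\<times>complex. v) \<in> tcar sR VR" if "v \<in> VR" for v by (rule tcar_const[OF that cR])
  have psiV: "\<psi> v \<in> VS" if "v \<in> VR" for v
    unfolding \<psi>_def using l(1) cst[OF that] tcar_vals[OF cS] by blast
  have psi_add: "\<psi> (v + v') = \<psi> v + \<psi> v'" if "v \<in> VR" "v' \<in> VR" for v v'
    unfolding \<psi>_def using l(2)[rule_format, OF cst[OF that(1)] cst[OF that(2)]] by simp
  have psi_smul: "\<psi> (sR c v) = sS c (\<psi> v)" if "v \<in> VR" for v c
    unfolding \<psi>_def using l(3)[rule_format, OF cst[OF that], of c] by simp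
  have psi_rho: "\<psi> (\<rho>R e v) = \<rho>S e (\<psi> v)" if "v \<in> VR" for v e
    unfolding \<psi>_def using rhoT[OF cst[OF that], of e] by simp
  have psi_zero: "v = 0" if v: "v \<in> VR" "\<psi> v = 0" for v
  proof -
    define G where "G = \<phi> (\<lambda>p. v)"
    have GS: "G \<in> tcar sS VS" unfolding G_def using l(1) cst[OF v(1)] by blast
    obtain A B where AB: "A \<in> tcar sS VS" "B \<in> tcar sS VS" "G = (\<lambda>p. G (0, 0) + sS (fst p) (A p) + sS (snd p) (B p))"
      using tcar_decomp[OF cS GS] by blast
    have G0: "G (0, 0) = 0" using v(2) unfolding G_def \<psi>_def .
    obtain A0 where A0: "A0 \<in> tcar sR VR" "\<phi> A0 = A" using AB(1) surj by (metis imageE)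
    obtain B0 where B0: "B0 \<in> tcar sR VR" "\<phi> B0 = B" using AB(2) surj by (metis imageE)
    have XA: "(\<lambda>p. sR (fst p) (A0 p)) \<in> tcar sR VR" by (rule tcar_X[OF cR A0(1)])
    have YB: "(\<lambda>p. sR (snd p) (B0 p)) \<in> tcar sR VR" by (rule tcar_Y[OF cR B0(1)])
    define T where "T = (\<lambda>p. (\<lambda>p. sR (fst p) (A0 p)) p + (\<lambda>p. sR (snd p) (B0 p)) p)"
    have T: "T \<in> tcar sR VR" unfolding T_def by (rule tcar_add[OF cR XA YB])
    have "\<phi> T = (\<lambda>p. \<phi> (\<lambda>p. sR (fst p) (A0 p)) p + \<phi> (\<lambda>p. sR (snd p) (B0 p)) p)"
      unfolding T_def by (rule l(2)[rule_format, OF XA YB])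
    also have "\<dots> = (\<lambda>p. sS (fst p) (A p) + sS (snd p) (B p))"
      using Xlin A0 Ylin B0 by simp
    also have "\<dots> = G"
    proof (rule ext)
      fix p
      have "G p = G (0, 0) + sS (fst p) (A p) + sS (snd p) (B p)" using fun_cong[OF AB(3), of p] by simp
      then show "sS (fst p) (A p) + sS (snd p) (B p) = G p" using G0 by simp
    qed
    finally have "\<phi> T = \<phi> (\<lambda>p. v)" unfolding G_def .
    then have "T = (\<lambda>p. v)" using inj_onD[OF inj _ T cst[OF v(1)]] by blast
    then have "v = T (0, 0)" by simp
    also have "\<dots> = 0" unfolding T_def
      using cvs_s0l[OF cR tcar_vals[OF cR A0(1)]] cvs_s0l[OF cR tcar_vals[OF cR B0(1)]] by simp
    finally show ?thesis .
  qed
  have psi_inj: "inj_on \<psi> VR"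
  proof (rule inj_onI)
    fix v v' assume vv: "v \<in> VR" "v' \<in> VR" "\<psi> v = \<psi> v'"
    have d: "v - v' \<in> VR" by (rule cvs_diff_mem[OF cR vv(1,2)])
    have "\<psi> v = \<psi> (v' + (v - v'))" by simp
    also have "\<dots> = \<psi> v' + \<psi> (v - v')" by (rule psi_add[OF vv(2) d])
    finally have "\<psi> (v - v') = 0" using vv(3) by simp
    then have "v - v' = 0" using psi_zero d by blast
    then show "v = v'" by simp
  qed
  have psi_surj: "\<psi> ` VR = VS"
  proof
    show "\<psi> ` VR \<subseteq> VS" using psiV by blast
  next
    show "VS \<subseteq> \<psi> ` VR"
    proof
      fix u assume u: "u \<in> VS"
      have cu: "(\<lambda>p::complex\<times>complex. u) \<in> tcar sS VS" by (rule tcar_const[OF u cS])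
      then obtain W where W: "W \<in> tcar sR VR" "\<phi> W = (\<lambda>p. u)" using surj by (metis imageE)
      obtain A B where AB: "A \<in> tcar sR VR" "B \<in> tcar sR VR" "W = (\<lambda>p. W (0, 0) + sR (fst p) (A p) + sR (snd p) (B p))"
        using tcar_decomp[OF cR W(1)] by blast
      have W0: "W (0, 0) \<in> VR" by (rule tcar_vals[OF cR W(1)])
      have XA: "(\<lambda>p. sR (fst p) (A p)) \<in> tcar sR VR" by (rule tcar_X[OF cR AB(1)])
      have YB: "(\<lambda>p. sR (snd p) (B p)) \<in> tcar sR VR" by (rule tcar_Y[OF cR AB(2)])
      have XY: "(\<lambda>p. (\<lambda>p. sR (fst p) (A p)) p + (\<lambda>p. sR (snd p) (B p)) p) \<in> tcar sR VR" by (rule tcar_add[OF cR XA YB])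
      have "W = (\<lambda>p. (\<lambda>p. W (0, 0)) p + (\<lambda>p. (\<lambda>p. sR (fst p) (A p)) p + (\<lambda>p. sR (snd p) (B p)) p) p)"
      proof (rule ext)
        fix p
        show "W p = (\<lambda>p. W (0, 0)) p + (\<lambda>p. (\<lambda>p. sR (fst p) (A p)) p + (\<lambda>p. sR (snd p) (B p)) p) p"
          using fun_cong[OF AB(3), of p] by (simp add: add.assoc)
      qed
      then have e1: "\<phi> W = (\<lambda>p. \<phi> (\<lambda>p. W (0, 0)) p + \<phi> (\<lambda>p. (\<lambda>p. sR (fst p) (A p)) p + (\<lambda>p. sR (snd p) (B p)) p) p)"
        using l(2)[rule_format, OF cst[OF W0] XY] by simp
      have e2: "\<phi> (\<lambda>p. (\<lambda>p. sR (fst p) (A p)) p + (\<lambda>p. sR (snd p) (B p)) p) = (\<lambda>p. sS (fst p) (\<phi> A p) + sS (snd p) (\<phi> B p))"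
        using l(2)[rule_format, OF XA YB] Xlin Ylin AB(1,2) by simp
      have "u = \<phi> W (0, 0)" using W(2) by simp
      also have "\<dots> = \<psi> (W (0, 0)) + (sS 0 (\<phi> A (0, 0)) + sS 0 (\<phi> B (0, 0)))"
        unfolding \<psi>_def using fun_cong[OF e1, of "(0,0)"] fun_cong[OF e2, of "(0,0)"] by simp
      also have "\<dots> = \<psi> (W (0, 0))"
        using cvs_s0l[OF cS tcar_vals[OF cS]] l(1) AB(1,2) by simp
      finally have "u = \<psi> (W (0, 0))" .
      then show "u \<in> \<psi> ` VR" using W0 by blast
    qed
  qed
  have "gmod_iso sR VR \<rho>R sS VS \<rho>S"
    unfolding gmod_iso_def
    by (rule exI[of _ \<psi>]) (use psi_inj psi_surj psi_add psi_smul psi_rho in \<open>auto simp: bij_betw_def\<close>)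
  then show ?thesis using lam_eq eta_eq sig_eq by blast
qed



lemma lin_zero: fixes \<psi> :: "'a::ab_group_add \<Rightarrow> 'b::ab_group_add" assumes "cvs s1 V1" "\<forall>x\<in>V1. \<forall>y\<in>V1. \<psi> (x + y) = \<psi> x + \<psi> y" shows "\<psi> 0 = 0"
proof -
  have "\<psi> (0 + 0) = \<psi> 0 + \<psi> 0" using assms(2) cvsD(1)[OF assms(1)] by blast
  then show ?thesis by simp
qed

lemma tcar_img:
  assumes c1: "cvs s1 V1" and c2: "cvs s2 V2" and m: "\<forall>x\<in>V1. \<psi> x \<in> V2"
    and a: "\<forall>x\<in>V1. \<forall>y\<in>V1. \<psi> (x + y) = \<psi> x + \<psi> y"
    and sm: "\<forall>c. \<forall>x\<in>V1. \<psi> (s1 c x) = s2 c (\<psi> x)"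
    and F: "F \<in> tcar s1 V1"
  shows "(\<lambda>p. \<psi> (F p)) \<in> tcar s2 V2"
  using c1 F
proof (induction rule: tcar_induct)
  case zero then show ?case using lin_zero[OF c1 a] tcar_zero by simp
next
  case (mono a b v)
  have "(\<lambda>p. \<psi> (tmono s1 a b v p)) = tmono s2 a b (\<psi> v)"
    using sm mono by (auto simp: tmono_def fun_eq_iff)
  then show ?case using tcar_mono m mono by metis
next
  case (add F G)
  have "(\<lambda>p. \<psi> (F p + G p)) = (\<lambda>p. \<psi> (F p) + \<psi> (G p))"
    using a tcar_vals[OF c1] add(1,2) by (simp add: fun_eq_iff)
  then show ?case using tcar_add[OF c2 add(3,4)] by simp
qed

lemma ompart_psi:
  assumes c1: "cvs s1 V1" "F \<in> tcar s1 V1"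
    and a: "\<forall>x\<in>V1. \<forall>y\<in>V1. \<psi> (x + y) = \<psi> x + \<psi> y"
    and sm: "\<forall>c. \<forall>x\<in>V1. \<psi> (s1 c x) = s2 c (\<psi> x)"
  shows "ompart s1 lam eta sig eps e F p \<in> V1 \<and> \<psi> (ompart s1 lam eta sig eps e F p) = ompart s2 lam eta sig eps e (\<lambda>p. \<psi> (F p)) p"
  using tcar_vals[OF assms(1,2)] cvsD(1,3)[OF assms(1)] sm lin_zero[OF assms(1) a]
  by (cases e) (auto simp: ompart_def)

lemma backward:
  assumes gR: "gmod sR VR \<rho>R" and gS: "gmod sS VS \<rho>S"
    and iso: "gmod_iso sR VR \<rho>R sS VS \<rho>S"
  shows "gmod_iso (tsmul sR) (tcar sR VR) (gact sR \<rho>R lam eta sig eps)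
                  (tsmul sS) (tcar sS VS) (gact sS \<rho>S lam eta sig eps)"
proof -
  have cR: "cvs sR VR" using gmodD(1)[OF gR] .
  have cS: "cvs sS VS" using gmodD(1)[OF gS] .
  obtain \<psi> where b: "bij_betw \<psi> VR VS" and a: "\<forall>x\<in>VR. \<forall>y\<in>VR. \<psi> (x + y) = \<psi> x + \<psi> y"
    and sm: "\<forall>c. \<forall>x\<in>VR. \<psi> (sR c x) = sS c (\<psi> x)" and r: "\<forall>e. \<forall>x\<in>VR. \<psi> (\<rho>R e x) = \<rho>S e (\<psi> x)"
    using iso unfolding gmod_iso_def by blast
  have m: "\<forall>x\<in>VR. \<psi> x \<in> VS" using bij_betwE[OF b] by blast
  define \<psi>' where "\<psi>' = inv_into VR \<psi>"
  have b': "bij_betw \<psi>' VS VR" unfolding \<psi>'_def by (rule bij_betw_inv_into[OF b])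
  have m': "\<forall>x\<in>VS. \<psi>' x \<in> VR" using bij_betwE[OF b'] by blast
  have inj: "inj_on \<psi> VR" using bij_betw_imp_inj_on[OF b] .
  have surj: "\<psi> ` VR = VS" using bij_betw_imp_surj_on[OF b] .
  have rinv: "\<psi> (\<psi>' u) = u" if "u \<in> VS" for u unfolding \<psi>'_def using f_inv_into_f surj that by metis
  have linv: "\<psi>' (\<psi> v) = v" if "v \<in> VR" for v unfolding \<psi>'_def using inv_into_f_f[OF inj that] .
  have a': "\<forall>x\<in>VS. \<forall>y\<in>VS. \<psi>' (x + y) = \<psi>' x + \<psi>' y"
  proof (intro ballI)
    fix x y assume xy: "x \<in> VS" "y \<in> VS"
    have "\<psi> (\<psi>' x + \<psi>' y) = x + y" using a m' xy rinv by simp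
    then show "\<psi>' (x + y) = \<psi>' x + \<psi>' y" using linv cvsD(2)[OF cR] m' xy by metis
  qed
  have sm': "\<forall>c. \<forall>x\<in>VS. \<psi>' (sS c x) = sR c (\<psi>' x)"
  proof (intro allI ballI)
    fix c x assume x: "x \<in> VS"
    have "\<psi> (sR c (\<psi>' x)) = sS c x" using sm m' x rinv by simp
    then show "\<psi>' (sS c x) = sR c (\<psi>' x)" using linv cvsD(3)[OF cR] m' x by metis
  qed
  define \<phi> where "\<phi> F = (\<lambda>p. \<psi> (F p))" for F :: "complex \<times> complex \<Rightarrow> _"
  have img: "\<phi> F \<in> tcar sS VS" if "F \<in> tcar sR VR" for F
    unfolding \<phi>_def by (rule tcar_img[OF cR cS m a sm that])
  have "bij_betw \<phi> (tcar sR VR) (tcar sS VS)"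
  proof (rule bij_betwI')
    fix F G assume FG: "F \<in> tcar sR VR" "G \<in> tcar sR VR"
    show "(\<phi> F = \<phi> G) = (F = G)"
    proof
      assume "\<phi> F = \<phi> G"
      then have "\<psi> (F p) = \<psi> (G p)" for p unfolding \<phi>_def by metis
      then show "F = G" using inj_onD[OF inj] tcar_vals[OF cR] FG by (metis ext)
    qed simp
  next
    fix F assume "F \<in> tcar sR VR" then show "\<phi> F \<in> tcar sS VS" by (rule img)
  next
    fix G assume G: "G \<in> tcar sS VS"
    have F: "(\<lambda>p. \<psi>' (G p)) \<in> tcar sR VR" by (rule tcar_img[OF cS cR m' a' sm' G])
    have "G = \<phi> (\<lambda>p. \<psi>' (G p))" unfolding \<phi>_def using rinv tcar_vals[OF cS G] by simp
    then show "\<exists>F\<in>tcar sR VR. G = \<phi> F" using F by blast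
  qed
  moreover have "\<forall>x\<in>tcar sR VR. \<forall>y\<in>tcar sR VR. \<phi> (x + y) = \<phi> x + \<phi> y"
    unfolding \<phi>_def using a tcar_vals[OF cR] by (simp add: func_plus)
  moreover have "\<forall>c. \<forall>x\<in>tcar sR VR. \<phi> (tsmul sR c x) = tsmul sS c (\<phi> x)"
    unfolding \<phi>_def tsmul_def using sm tcar_vals[OF cR] by simp
  moreover have "\<forall>e. \<forall>x\<in>tcar sR VR. \<phi> (gact sR \<rho>R lam eta sig eps e x) = gact sS \<rho>S lam eta sig eps e (\<phi> x)"
  proof (intro allI ballI)
    fix e x assume x: "x \<in> tcar sR VR"
    show "\<phi> (gact sR \<rho>R lam eta sig eps e x) = gact sS \<rho>S lam eta sig eps e (\<phi> x)"
    proof (rule ext)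
      fix p
      have o: "ompart sR lam eta sig eps e x p \<in> VR \<and> \<psi> (ompart sR lam eta sig eps e x p) = ompart sS lam eta sig eps e (\<lambda>p. \<psi> (x p)) p"
        by (rule ompart_psi[OF cR x a sm])
      have rv: "\<rho>R e (x p) \<in> VR" using gmodD(2)[OF gR tcar_vals[OF cR x]] .
      show "\<phi> (gact sR \<rho>R lam eta sig eps e x) p = gact sS \<rho>S lam eta sig eps e (\<phi> x) p"
        unfolding \<phi>_def gact_def using a o rv r tcar_vals[OF cR x] by simp
    qed
  qed
  ultimately show ?thesis unfolding gmod_iso_def by blast
qed

lemma noniso:
  assumes lam: "lam1 \<noteq> 0" and sig: "sig1 \<noteq> 0"
    and gR: "gmod sR VR \<rho>R" and rR: "restricted_gmod VR \<rho>R" and nR: "VR \<noteq> {0}"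
    and gS: "gmod sS VS \<rho>S" and rS: "restricted_gmod VS \<rho>S"
  shows "\<not> gmod_iso (tsmul sR) (tcar sR VR) (gact sR \<rho>R lam eta sig 1)
                    (tsmul sS) (tcar sS VS) (gact sS \<rho>S lam1 eta1 sig1 (-1))"
proof
  assume iso: "gmod_iso (tsmul sR) (tcar sR VR) (gact sR \<rho>R lam eta sig 1)
                    (tsmul sS) (tcar sS VS) (gact sS \<rho>S lam1 eta1 sig1 (-1))"
  have cR: "cvs sR VR" using gmodD(1)[OF gR] .
  have cS: "cvs sS VS" using gmodD(1)[OF gS] .
  obtain \<phi> where bij: "bij_betw \<phi> (tcar sR VR) (tcar sS VS)" and lin: "linmap sR VR sS VS \<phi>"
    and intw: "\<forall>e. \<forall>x\<in>tcar sR VR. \<phi> (gact sR \<rho>R lam eta sig 1 e x) = gact sS \<rho>S lam1 eta1 sig1 (-1) e (\<phi> x)"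
    using iso_unpack[OF iso] by blast
  have inj: "inj_on \<phi> (tcar sR VR)" using bij_betw_imp_inj_on[OF bij] .
  have p0: "\<phi> (\<lambda>p. 0) = (\<lambda>p. 0)" by (rule phi_zero[OF lin])
  obtain v0 where v0: "v0 \<in> VR" "v0 \<noteq> 0" using nonzero_elem[OF cR nR] by blast
  have w0: "(\<lambda>p::complex\<times>complex. v0) \<in> tcar sR VR" by (rule tcar_const[OF v0(1) cR])
  define G where "G = \<phi> (\<lambda>p. v0)"
  have GS: "G \<in> tcar sS VS" unfolding G_def using lin w0 unfolding linmap_def by blast
  have Gnz: "G \<noteq> (\<lambda>p. 0)"
  proof
    assume "G = (\<lambda>p. 0)"
    then have "\<phi> (\<lambda>p. v0) = \<phi> (\<lambda>p. 0)" using p0 unfolding G_def by simp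
    then have "(\<lambda>p::complex\<times>complex. v0) = (\<lambda>p. 0)" using inj_onD[OF inj _ w0 tcar_zero] by blast
    then show False using v0(2) by metis
  qed
  obtain N1 where N1: "killed \<rho>R N1 v0" using tcar_killed[OF gR rR w0] by blast
  obtain N2 where N2: "\<forall>p. killed \<rho>S N2 (G p)" using tcar_killed[OF gS rS GS] by blast
  define k where "k = int (max N1 N2) + 1"
  have z1: "\<rho>R (J k) v0 = 0" using killed_mono[OF N1, of "max N1 N2"] unfolding killed_def k_def by simp
  have z2: "\<rho>S (J k) (G p) = 0" for p
  proof -
    have "killed \<rho>S (max N1 N2) (G p)" using N2 killed_mono by (metis max.cobounded2)
    then show ?thesis unfolding killed_def k_def by simp
  qed
  have "gact sR \<rho>R lam eta sig 1 (J k) (\<lambda>p. v0) = (\<lambda>p. 0)"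
    by (rule ext) (simp add: gact_def ompart_def z1)
  then have "gact sS \<rho>S lam1 eta1 sig1 (-1) (J k) G = (\<lambda>p. 0)"
    using intw w0 p0 unfolding G_def by metis
  then have e: "(\<lambda>p. sS (lam1 powi k * sig1) (G (fst p + 1, snd p - of_int k))) = (\<lambda>p. 0)"
    using z2 by (simp add: gact_def ompart_def)
  have z3: "sS (lam1 powi k * sig1) (G (fst p + 1, snd p - of_int k)) = 0" for p
    using fun_cong[OF e, of p] by simp
  have "G (fst p + 1, snd p - of_int k) = 0" for p
  proof -
    have ne: "lam1 powi k * sig1 \<noteq> 0" using lam sig by simp
    show ?thesis by (rule cvs_cancel[OF cS tcar_vals[OF cS GS] ne]) (rule z3)
  qed
  from this[of "(fst q - 1, snd q + of_int k)" for q] have "G q = 0" for q by simp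
  then show False using Gnz by (metis ext)
qed


theorem theorem4p3:
  fixes sR :: "complex \<Rightarrow> 'v::ab_group_add \<Rightarrow> 'v" and VR :: "'v set" and \<rho>R :: "gbasis \<Rightarrow> 'v \<Rightarrow> 'v"
    and sS :: "complex \<Rightarrow> 'w::ab_group_add \<Rightarrow> 'w" and VS :: "'w set" and \<rho>S :: "gbasis \<Rightarrow> 'w \<Rightarrow> 'w"
    and lam lam1 sig sig1 eta eta1 :: complex
  assumes "lam \<noteq> 0" "lam1 \<noteq> 0" "sig \<noteq> 0" "sig1 \<noteq> 0"
    and "irreducible_gmod sR VR \<rho>R" "restricted_gmod VR \<rho>R"
    and "irreducible_gmod sS VS \<rho>S" "restricted_gmod VS \<rho>S"
  shows "(gmod_iso (tsmul sR) (tcar sR VR) (omegaA_tensor sR \<rho>R lam eta sig)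
                  (tsmul sS) (tcar sS VS) (omegaA_tensor sS \<rho>S lam1 eta1 sig1)
           \<longleftrightarrow> lam = lam1 \<and> eta = eta1 \<and> sig = sig1 \<and> gmod_iso sR VR \<rho>R sS VS \<rho>S)
    \<and> (gmod_iso (tsmul sR) (tcar sR VR) (omegaB_tensor sR \<rho>R lam eta sig)
                  (tsmul sS) (tcar sS VS) (omegaB_tensor sS \<rho>S lam1 eta1 sig1)
           \<longleftrightarrow> lam = lam1 \<and> eta = eta1 \<and> sig = sig1 \<and> gmod_iso sR VR \<rho>R sS VS \<rho>S)
    \<and> \<not> gmod_iso (tsmul sR) (tcar sR VR) (omegaA_tensor sR \<rho>R lam eta sig)
                    (tsmul sS) (tcar sS VS) (omegaB_tensor sS \<rho>S lam1 eta1 sig1)"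
proof -
  have gR: "gmod sR VR \<rho>R" and nR: "VR \<noteq> {0}" using assms(5) unfolding irreducible_gmod_def by blast+
  have gS: "gmod sS VS \<rho>S" and nS: "VS \<noteq> {0}" using assms(7) unfolding irreducible_gmod_def by blast+
  have p: "gmod_iso (tsmul sR) (tcar sR VR) (gact sR \<rho>R lam eta sig e)
                  (tsmul sS) (tcar sS VS) (gact sS \<rho>S lam1 eta1 sig1 e)
           \<longleftrightarrow> lam = lam1 \<and> eta = eta1 \<and> sig = sig1 \<and> gmod_iso sR VR \<rho>R sS VS \<rho>S"
    if e: "e = 1 \<or> e = -1" for e
  proof
    assume "gmod_iso (tsmul sR) (tcar sR VR) (gact sR \<rho>R lam eta sig e)
                  (tsmul sS) (tcar sS VS) (gact sS \<rho>S lam1 eta1 sig1 e)"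
    then show "lam = lam1 \<and> eta = eta1 \<and> sig = sig1 \<and> gmod_iso sR VR \<rho>R sS VS \<rho>S"
      by (rule forward[OF e assms(1-4) gR assms(6) nR gS assms(8) nS])
  next
    assume h: "lam = lam1 \<and> eta = eta1 \<and> sig = sig1 \<and> gmod_iso sR VR \<rho>R sS VS \<rho>S"
    then have "gmod_iso (tsmul sR) (tcar sR VR) (gact sR \<rho>R lam eta sig e)
                  (tsmul sS) (tcar sS VS) (gact sS \<rho>S lam eta sig e)"
      using backward[OF gR gS] by blast
    then show "gmod_iso (tsmul sR) (tcar sR VR) (gact sR \<rho>R lam eta sig e)
                  (tsmul sS) (tcar sS VS) (gact sS \<rho>S lam1 eta1 sig1 e)"
      using h by simp
  qed
  show ?thesis
    unfolding omegaA_gen omegaB_gen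
    using p[of 1] p[of "-1"] noniso[OF assms(2,4) gR assms(6) nR gS assms(8)] by simp
qed

end
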